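(* Let $f: S^1 \rightarrow S^1$ be a Morse-Smale diffeomorphism. (i) If $f$ preserves orientation and all periodic points of $f$ have period $N$, then $\Omega(C(f))= Per_N(C(f)) \cup \{S^1\}$. (ii) If $f$ reverses orientation, then $\Omega(C(f))= Per_2(C(f)) \cup Fix(C(f))$.
   Context: A $C^r$ diffeomorphism ($r\ge1$) of a compact connected manifold without boundary is Morse-Smale if its nonwandering set consists of finitely many periodic points, all hyperbolic, with mutually transversal stable and unstable manifolds. $C(S^1)$ is the hyperspace of nonempty compact connected subsets of $S^1$ with the Hausdorff metric and $C(f)(A)=f(A)$. $\Omega(C(f))$ is the nonwandering set of $C(f)$, $Fix(C(f))$ its set of fixed points, and $Per_k(C(f))$ its set of periodic points of period $k$. *)

theory Defs
  imports "HOL-Analysis.Analysis"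
begin

definition S1 :: "complex set" where
  "S1 = sphere 0 1"

text \<open>The hyperspace C(S^1): nonempty compact connected subsets of S^1
  (metrised by the Hausdorff distance hausdist).\<close>
definition hyperspace_C :: "complex set set" where
  "hyperspace_C = {A. A \<subseteq> S1 \<and> A \<noteq> {} \<and> compact A \<and> connected A}"

definition hausdorff_dist :: "complex set \<Rightarrow> complex set \<Rightarrow> real" where
  "hausdorff_dist A B = max (SUP a\<in>A. infdist a B) (SUP b\<in>B. infdist b A)"

definition induced_map :: "(complex \<Rightarrow> complex) \<Rightarrow> complex set \<Rightarrow> complex set" where
  "induced_map f A = f ` A"

text \<open>Nonwandering set of a map g on a metric space (X,d): x is nonwandering iff
  every (ball) neighbourhood U of x satisfies g^n(U) \<inter> U \<noteq> {} for some n \<ge> 1.\<close>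
definition nonwandering_set :: "('a \<Rightarrow> 'a \<Rightarrow> real) \<Rightarrow> 'a set \<Rightarrow> ('a \<Rightarrow> 'a) \<Rightarrow> 'a set" where
  "nonwandering_set d X g =
     {x \<in> X. \<forall>e>0. \<exists>y\<in>X. \<exists>n\<ge>1. d x y < e \<and> d x ((g ^^ n) y) < e}"

definition periodic_points :: "'a set \<Rightarrow> ('a \<Rightarrow> 'a) \<Rightarrow> 'a set" where
  "periodic_points X g = {x \<in> X. \<exists>n>0. (g ^^ n) x = x}"

definition per_points :: "'a set \<Rightarrow> ('a \<Rightarrow> 'a) \<Rightarrow> nat \<Rightarrow> 'a set" where
  "per_points X g k =
     {x \<in> X. 0 < k \<and> (g ^^ k) x = x \<and> (\<forall>j. 0 < j \<and> j < k \<longrightarrow> (g ^^ j) x \<noteq> x)}"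

definition fixed_points :: "'a set \<Rightarrow> ('a \<Rightarrow> 'a) \<Rightarrow> 'a set" where
  "fixed_points X g = {x \<in> X. g x = x}"

definition circle_lift :: "(complex \<Rightarrow> complex) \<Rightarrow> (real \<Rightarrow> real) \<Rightarrow> bool" where
  "circle_lift f F \<longleftrightarrow> (\<forall>t. f (cis t) = cis (F t))"

definition circle_C1_diffeo :: "(complex \<Rightarrow> complex) \<Rightarrow> bool" where
  "circle_C1_diffeo f \<longleftrightarrow> f ` S1 = S1 \<and> inj_on f S1 \<and>
     (\<exists>F F'. circle_lift f F \<and> (\<forall>t. (F has_real_derivative F' t) (at t)) \<and>
             continuous_on UNIV F' \<and> (\<forall>t. F' t \<noteq> 0))"

definition hyperbolic_periodic_point :: "(complex \<Rightarrow> complex) \<Rightarrow> complex \<Rightarrow> bool" where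
  "hyperbolic_periodic_point f p \<longleftrightarrow>
     (\<forall>F. circle_lift f F \<and> (\<forall>t. F differentiable (at t)) \<longrightarrow>
        (\<forall>n>0. (f ^^ n) p = p \<longrightarrow> (\<forall>t. cis t = p \<longrightarrow> \<bar>deriv (F ^^ n) t\<bar> \<noteq> 1)))"

text \<open>Morse-Smale diffeomorphism of S^1 (transversality of stable/unstable manifolds
  is automatic in dimension one for hyperbolic periodic points).\<close>
definition morse_smale :: "(complex \<Rightarrow> complex) \<Rightarrow> bool" where
  "morse_smale f \<longleftrightarrow> circle_C1_diffeo f \<and>
     finite (nonwandering_set dist S1 f) \<and>
     nonwandering_set dist S1 f \<subseteq> periodic_points S1 f \<and>
     (\<forall>p \<in> nonwandering_set dist S1 f. hyperbolic_periodic_point f p)"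

definition orientation_preserving :: "(complex \<Rightarrow> complex) \<Rightarrow> bool" where
  "orientation_preserving f \<longleftrightarrow>
     (\<exists>F. continuous_on UNIV F \<and> circle_lift f F \<and> strict_mono F)"

definition orientation_reversing :: "(complex \<Rightarrow> complex) \<Rightarrow> bool" where
  "orientation_reversing f \<longleftrightarrow>
     (\<exists>F. continuous_on UNIV F \<and> circle_lift f F \<and> (\<forall>s t. s < t \<longrightarrow> F t < F s))"

end

theory Submission
  imports Defs
begin



lemma cis_eq_iff_int: "cis s = cis t \<longleftrightarrow> (\<exists>k::int. s = t + 2*pi*k)"
proof -
  have "cis s = cis t \<longleftrightarrow> sin s = sin t \<and> cos s = cos t"
    by (auto simp add: complex_eq_iff)
  also have "\<dots> \<longleftrightarrow> (\<exists>k::int. s = t + 2*pi*k)" by (rule sin_cos_eq_iff)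
  finally show ?thesis .
qed

lemma cis_shift_int [simp]: "cis (t + 2*pi * of_int k) = cis t"
  by (metis cis_eq_iff_int)

lemma norm_cis_minus_1: "norm (cis x - 1) \<le> \<bar>x\<bar>"
proof -
  have "(norm (cis x - 1))\<^sup>2 = (cos x - 1)\<^sup>2 + (sin x)\<^sup>2"
    by (simp add: cmod_def cis.code)
  also have "\<dots> = 2 - 2 * cos x" 
    using sin_cos_squared_add[of x] by (simp add: power2_eq_square algebra_simps)
  also have "\<dots> = 4 * (sin (x/2))\<^sup>2"
    using cos_double_sin[of "x/2"] by simp
  also have "\<dots> \<le> 4 * (x/2)\<^sup>2"
    using abs_sin_x_le_abs_x[of "x/2"]
    by (intro mult_left_mono) (auto simp: abs_le_square_iff[symmetric])
  also have "\<dots> = x\<^sup>2" by (simp add: power2_eq_square)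
  finally have "(norm (cis x - 1))\<^sup>2 \<le> x\<^sup>2" .
  then show ?thesis by (simp add: abs_le_square_iff[symmetric])
qed

lemma dist_cis_le: "dist (cis s) (cis t) \<le> \<bar>s - t\<bar>"
proof -
  have "cis s - cis t = cis t * (cis (s - t) - 1)"
    by (simp add: algebra_simps flip: cis_mult cis_divide)
  then have "dist (cis s) (cis t) = norm (cis (s-t) - 1)"
    by (simp add: dist_norm norm_mult)
  then show ?thesis using norm_cis_minus_1 by simp
qed

lemma S1_cis: "z \<in> S1 \<longleftrightarrow> norm z = 1"
  by (simp add: S1_def)

lemma cis_in_S1 [simp]: "cis t \<in> S1"
  by (simp add: S1_def)

lemma S1_cis_from: assumes "z \<in> S1" shows "\<exists>t. t \<in> {\<alpha>..<\<alpha>+2*pi} \<and> z = cis t"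
proof -
  have nz: "norm (z / cis \<alpha>) = 1" using assms by (simp add: S1_def norm_divide)
  define u where "u = Arg2pi (z / cis \<alpha>)"
  have u: "0 \<le> u" "u < 2*pi" using Arg2pi by (auto simp: u_def)
  have "exp (\<i> * of_real u) = z / cis \<alpha>" using nz complex_norm_eq_1_exp u_def by blast
  then have "cis u = z / cis \<alpha>" by (simp add: cis_conv_exp mult.commute)
  then have "z = cis (\<alpha> + u)" by (simp add: cis_mult[symmetric] field_simps)
  then show ?thesis using u by (intro exI[of _ "\<alpha>+u"]) auto
qed




lemma cis_image_shift: "cis ` {x + 2*pi * of_int k .. y + 2*pi * of_int k} = cis ` {x..y}"
proof -
  have "{x + 2*pi * of_int k .. y + 2*pi * of_int k} = (\<lambda>t. t + 2*pi * of_int k) ` {x..y}"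
  proof (rule set_eqI, rule iffI)
    fix u assume "u \<in> {x + 2*pi * of_int k .. y + 2*pi * of_int k}"
    then have "u - 2*pi * of_int k \<in> {x..y}" by auto
    then show "u \<in> (\<lambda>t. t + 2*pi * of_int k) ` {x..y}" by (intro image_eqI[where x="u - 2*pi * of_int k"]) auto
  qed auto
  then have "cis ` {x + 2*pi * of_int k .. y + 2*pi * of_int k} = (\<lambda>t. cis (t + 2*pi * of_int k)) ` {x..y}"
    by (simp only: image_image)
  also have "\<dots> = cis ` {x..y}" by (rule image_cong) (simp_all only: cis_shift_int)
  finally show ?thesis .
qed

lemma int_between_0_1: "0 < (2*pi) * of_int (k::int) \<Longrightarrow> 2*pi * of_int k < 2*pi \<Longrightarrow> False"
proof -
  assume a: "0 < (2*pi) * of_int k" "2*pi * of_int k < 2*pi"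
  have "0 < (of_int k::real)" using a(1) pi_gt_zero by (simp add: zero_less_mult_iff)
  moreover have "of_int k < (1::real)" using a(2) pi_gt_zero by simp
  ultimately have "0 < k" "k < 1" by simp_all
  then show False by simp
qed

lemma cis_gap: assumes "d < t" "t < c + 2*pi" shows "cis t \<notin> cis ` {c..d}"
proof
  assume "cis t \<in> cis ` {c..d}"
  then obtain s where s: "s \<in> {c..d}" "cis t = cis s" by auto
  then obtain k::int where "t = s + 2*pi * of_int k" using cis_eq_iff_int by blast
  moreover have "c \<le> s" "s \<le> d" using s by auto
  ultimately have "0 < 2*pi * of_int k" "2*pi * of_int k < 2*pi" using assms by linarith+
  then show False using int_between_0_1[of k] by blast
qed

lemma arc_unique_aux:
  assumes "c \<le> p" "p \<le> d" "p \<le> q" "q - p < 2*pi" "c \<le> d" "d - c < 2*pi"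
    and eq: "cis ` {p..q} = cis ` {c..d}"
  shows "p = c \<and> q = d"
proof -
  have "cis c \<in> cis ` {p..q}" using eq assms by auto
  then obtain s where s: "s \<in> {p..q}" "cis c = cis s" by auto
  then obtain j::int where j: "c = s + 2*pi * of_int j" using cis_eq_iff_int by blast
  have pc: "p = c"
  proof (cases "j = 0")
    case True then show ?thesis using j s assms by auto
  next
    case False
    show ?thesis
    proof (cases "j > 0")
      case True
      then have "of_int j \<ge> (1::real)" by simp
      then have "2*pi * of_int j \<ge> 2*pi" using pi_gt_zero by simp
      moreover have "p \<le> s" using s by auto
      ultimately show ?thesis using j assms by linarith
    next
      case False
      with \<open>j \<noteq> 0\<close> have "of_int j \<le> (-1::real)" by simp
      then have "2*pi * of_int j \<le> -2*pi" using pi_gt_zero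
      proof -
        have "2*pi * of_int j \<le> 2*pi * (-1)" using \<open>of_int j \<le> (-1::real)\<close> pi_gt_zero
          by (intro mult_left_mono) auto
        then show ?thesis by simp
      qed
      then have cs: "c + 2*pi \<le> s" using j by simp
      define t where "t = (d + c + 2*pi)/2"
      have "d < t" "t < c + 2*pi" using assms unfolding t_def by auto
      then have "cis t \<notin> cis ` {c..d}" by (rule cis_gap)
      moreover have "t \<in> {p..q}" using \<open>d < t\<close> \<open>t < c + 2*pi\<close> cs s assms by auto
      ultimately show ?thesis using eq by auto
    qed
  qed
  have "q = d"
  proof (rule ccontr)
    assume "q \<noteq> d"
    then consider "q < d" | "d < q" by linarith
    then show False
    proof cases
      case 1
      have "cis d \<notin> cis ` {p..q}" using 1 pc assms by (intro cis_gap) auto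
      then show False using eq assms by auto
    next
      case 2
      have "cis q \<notin> cis ` {c..d}" using 2 pc assms by (intro cis_gap) auto
      then show False using eq assms by auto
    qed
  qed
  then show ?thesis using pc by auto
qed

lemma arc_unique:
  assumes "p \<le> q" "q - p < 2*pi" "c \<le> d" "d - c < 2*pi"
    and eq: "cis ` {p..q} = cis ` {c..d}"
  shows "\<exists>k::int. p = c + 2*pi * of_int k \<and> q = d + 2*pi * of_int k"
proof -
  have "cis p \<in> cis ` {c..d}" using eq assms by auto
  then obtain s where s: "s \<in> {c..d}" "cis p = cis s" by auto
  then obtain k::int where k: "p = s + 2*pi * of_int k" using cis_eq_iff_int by blast
  have e2: "cis ` {(p - 2*pi * of_int k) + 2*pi * of_int k .. (q - 2*pi * of_int k) + 2*pi * of_int k}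
       = cis ` {p - 2*pi * of_int k .. q - 2*pi * of_int k}" by (rule cis_image_shift)
  have "cis ` {p - 2*pi * of_int k .. q - 2*pi * of_int k} = cis ` {c..d}" using e2 eq by simp
  then have "p - 2*pi * of_int k = c \<and> q - 2*pi * of_int k = d"
    using k s assms by (intro arc_unique_aux) auto
  then show ?thesis by (intro exI[of _ k]) auto
qed

lemma arc_unique_cis:
  assumes "p \<le> q" "q - p < 2*pi" "c \<le> d" "d - c < 2*pi"
    and eq: "cis ` {p..q} = cis ` {c..d}"
  shows "cis p = cis c \<and> cis q = cis d"
  using arc_unique[OF assms] by auto

lemma cis_not_nonpos: assumes "\<bar>u\<bar> < pi" shows "cis u \<notin> \<real>\<^sub>\<le>\<^sub>0"
proof
  assume "cis u \<in> \<real>\<^sub>\<le>\<^sub>0"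
  then have im: "sin u = 0" and re: "cos u \<le> 0"
    by (auto simp: complex_nonpos_Reals_iff)
  from im have "u = 0" using assms sin_zero_pi_iff by fastforce
  then show False using re by simp
qed

lemma arc_classify_open:
  assumes "\<alpha> < \<beta>" "\<beta> \<le> \<alpha> + 2*pi" "K \<subseteq> cis ` {\<alpha><..<\<beta>}" "K \<noteq> {}" "compact K" "connected K"
  shows "\<exists>c d. \<alpha> < c \<and> c \<le> d \<and> d < \<beta> \<and> K = cis ` {c..d}"
proof -
  define \<gamma> where "\<gamma> = \<alpha> + pi"
  define \<psi> where "\<psi> z = \<gamma> + Arg (z / cis \<gamma>)" for z
  have psi: "\<psi> (cis t) = t" "cis t / cis \<gamma> \<notin> \<real>\<^sub>\<le>\<^sub>0" if "t \<in> {\<alpha><..<\<beta>}" for t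
  proof -
    have "cis t / cis \<gamma> = cis (t - \<gamma>)" by (simp add: cis_divide)
    moreover have "t - \<gamma> \<in> {-pi<..pi}" "\<bar>t - \<gamma>\<bar> < pi" using that assms unfolding \<gamma>_def by auto
    ultimately show "\<psi> (cis t) = t" "cis t / cis \<gamma> \<notin> \<real>\<^sub>\<le>\<^sub>0"
      unfolding \<psi>_def using Arg_cis cis_not_nonpos by auto
  qed
  have cont: "continuous_on K \<psi>"
  proof (rule continuous_at_imp_continuous_on, rule ballI)
    fix z assume "z \<in> K"
    then obtain t where t: "t \<in> {\<alpha><..<\<beta>}" "z = cis t" using assms(3) by blast
    have "continuous (at (z / cis \<gamma>)) Arg" using psi(2)[OF t(1)] t continuous_at_Arg by simp
    then have "continuous (at z) (\<lambda>z. Arg (z / cis \<gamma>))"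
      by (intro continuous_at_compose[unfolded o_def, of z "\<lambda>z. z / cis \<gamma>" Arg]) (auto intro!: continuous_intros)
    then show "continuous (at z) \<psi>" unfolding \<psi>_def by (intro continuous_intros)
  qed
  have K': "compact (\<psi> ` K)" "connected (\<psi> ` K)"
    using compact_continuous_image[OF cont assms(5)] connected_continuous_image[OF cont assms(6)] by auto
  then obtain c d where cd: "\<psi> ` K = {c..d}" using connected_compact_interval_1 by blast
  have sub: "\<psi> ` K \<subseteq> {\<alpha><..<\<beta>}"
  proof
    fix x assume "x \<in> \<psi> ` K"
    then obtain z where "z \<in> K" "x = \<psi> z" by auto
    then obtain t where t: "t \<in> {\<alpha><..<\<beta>}" "z = cis t" using assms(3) by blast
    then show "x \<in> {\<alpha><..<\<beta>}" using psi \<open>x = \<psi> z\<close> by auto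
  qed
  have inv: "cis (\<psi> z) = z" if zK: "z \<in> K" for z
  proof -
    obtain t where t: "t \<in> {\<alpha><..<\<beta>}" "z = cis t" using assms(3) zK by blast
    then show ?thesis using psi by auto
  qed
  have "cis ` (\<psi> ` K) = K" using inv by (force simp: image_image)
  then have Keq: "K = cis ` {c..d}" using cd by simp
  have "{c..d} \<noteq> {}" using cd assms by auto
  then have "c \<le> d" by simp
  then have "c \<in> {\<alpha><..<\<beta>}" "d \<in> {\<alpha><..<\<beta>}" using sub cd by auto
  then show ?thesis using Keq \<open>c \<le> d\<close> by auto
qed

lemma arc_classify:
  assumes "A \<in> hyperspace_C" "A \<noteq> S1"
  shows "\<exists>c d. c \<le> d \<and> d < c + 2*pi \<and> A = cis ` {c..d}"
proof -
  have A: "A \<subseteq> S1" "A \<noteq> {}" "compact A" "connected A" using assms by (auto simp: hyperspace_C_def)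
  then obtain z0 where z0: "z0 \<in> S1" "z0 \<notin> A" using assms by blast
  then obtain \<alpha> where "\<alpha> \<in> {0..<0+2*pi}" "z0 = cis \<alpha>" using S1_cis_from by blast
  have "A \<subseteq> cis ` {\<alpha><..<\<alpha>+2*pi}"
  proof
    fix z assume "z \<in> A"
    then obtain t where t: "t \<in> {\<alpha>..<\<alpha>+2*pi}" "z = cis t" using S1_cis_from A by blast
    then have "t \<noteq> \<alpha>" using \<open>z \<in> A\<close> z0 \<open>z0 = cis \<alpha>\<close> by auto
    then show "z \<in> cis ` {\<alpha><..<\<alpha>+2*pi}" using t by auto
  qed
  from arc_classify_open[OF _ _ this A(2-4)] obtain c d where
    "\<alpha> < c" "c \<le> d" "d < \<alpha> + 2*pi" "A = cis ` {c..d}" using pi_gt_zero by auto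
  then show ?thesis by (intro exI[of _ c] exI[of _ d]) auto
qed




section \<open>Hausdorff distance facts\<close>

lemma infdist_S1_bdd: assumes "B \<subseteq> S1" "B \<noteq> {}" "A \<subseteq> S1"
  shows "bdd_above ((\<lambda>a. infdist a B) ` A)"
proof -
  obtain b0 where b0: "b0 \<in> B" using assms by auto
  have "infdist a B \<le> 2" if "a \<in> A" for a
  proof -
    have "infdist a B \<le> dist a b0" using b0 by (rule infdist_le)
    also have "\<dots> \<le> norm a + norm b0" by (simp add: dist_norm norm_triangle_ineq4)
    also have "\<dots> = 2"
    proof -
      have "a \<in> S1" "b0 \<in> S1" using that assms b0 by auto
      then show ?thesis by (simp add: S1_cis)
    qed
    finally show ?thesis .
  qed
  then show ?thesis by (rule bdd_aboveI2)
qed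

lemma hd_self: assumes "A \<subseteq> S1" "A \<noteq> {}" shows "hausdorff_dist A A = 0"
proof -
  have "(SUP a\<in>A. infdist a A) = (SUP a\<in>A. (0::real))"
    by (rule SUP_cong) auto
  then show ?thesis using assms by (simp add: hausdorff_dist_def)
qed

lemma hd_lt:
  assumes "A \<subseteq> S1" "A \<noteq> {}" "B \<subseteq> S1" "B \<noteq> {}" "hausdorff_dist A B < e"
  shows "\<forall>x\<in>A. infdist x B < e" "\<forall>y\<in>B. infdist y A < e"
proof -
  show "\<forall>x\<in>A. infdist x B < e"
  proof
    fix x assume "x \<in> A"
    then have "infdist x B \<le> (SUP a\<in>A. infdist a B)"
      using infdist_S1_bdd[of B A] assms by (intro cSUP_upper) auto
    then show "infdist x B < e" using assms(5) unfolding hausdorff_dist_def by linarith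
  qed
  show "\<forall>y\<in>B. infdist y A < e"
  proof
    fix y assume "y \<in> B"
    then have "infdist y A \<le> (SUP b\<in>B. infdist b A)"
      using infdist_S1_bdd[of A B] assms by (intro cSUP_upper) auto
    then show "infdist y A < e" using assms(5) unfolding hausdorff_dist_def by linarith
  qed
qed

lemma induced_pow: "(induced_map f ^^ n) A = (f ^^ n) ` A"
  by (induction n arbitrary: A) (auto simp: induced_map_def image_comp)

lemma periodic_nonwandering:
  assumes "x \<in> X" "n > 0" "(g ^^ n) x = x" "d x x = 0"
  shows "x \<in> nonwandering_set d X g"
  using assms unfolding nonwandering_set_def by (auto intro!: bexI[of _ x] exI[of _ n])

lemma hyper_in_S1: "A \<in> hyperspace_C \<Longrightarrow> A \<subseteq> S1 \<and> A \<noteq> {}"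
  by (simp add: hyperspace_C_def)

section \<open>Degree one and degree minus one lifts\<close>

definition deg1 :: "(real \<Rightarrow> real) \<Rightarrow> bool" where
  "deg1 G \<longleftrightarrow> continuous_on UNIV G \<and> strict_mono G \<and> (\<forall>t. G (t + 2*pi) = G t + 2*pi)"

definition degm1 :: "(real \<Rightarrow> real) \<Rightarrow> bool" where
  "degm1 G \<longleftrightarrow> continuous_on UNIV G \<and> (\<forall>s t. s < t \<longrightarrow> G t < G s) \<and> (\<forall>t. G (t + 2*pi) = G t - 2*pi)"

lemma deg1_minus: "deg1 G \<Longrightarrow> G (x - 2*pi) = G x - 2*pi"
  unfolding deg1_def by (metis add_diff_cancel_right' diff_add_cancel)

lemma degm1_minus: "degm1 G \<Longrightarrow> G (x - 2*pi) = G x + 2*pi"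
  unfolding degm1_def by (metis add_diff_cancel_right' diff_add_cancel)

lemma cont_comp_UNIV: "continuous_on UNIV (G::real\<Rightarrow>real) \<Longrightarrow> continuous_on UNIV G' \<Longrightarrow> continuous_on UNIV (G \<circ> G')"
  by (metis continuous_on_compose continuous_on_subset subset_UNIV)

lemma deg1_comp: "deg1 G \<Longrightarrow> deg1 G' \<Longrightarrow> deg1 (G \<circ> G')"
  unfolding deg1_def using cont_comp_UNIV by (auto simp: strict_mono_def)

lemma degm1_comp1: "degm1 G \<Longrightarrow> deg1 G' \<Longrightarrow> degm1 (G \<circ> G')"
  unfolding deg1_def degm1_def using cont_comp_UNIV by (auto simp: strict_mono_def)

lemma degm1_comp2: assumes "degm1 G" "degm1 G'" shows "deg1 (G \<circ> G')"
proof -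
  have "G (G' (t + 2*pi)) = G (G' t) + 2*pi" for t
    using assms degm1_minus[OF assms(1)] by (simp add: degm1_def)
  then show ?thesis using assms unfolding deg1_def degm1_def
    using cont_comp_UNIV by (auto simp: strict_mono_def)
qed

lemma deg1_id: "deg1 id"
  unfolding deg1_def by (auto simp: strict_mono_def)

lemma deg1_pow: "deg1 G \<Longrightarrow> deg1 (G ^^ n)"
  by (induction n) (auto simp: deg1_id deg1_comp)

lemma degm1_pow: "degm1 G \<Longrightarrow> (even n \<longrightarrow> deg1 (G ^^ n)) \<and> (odd n \<longrightarrow> degm1 (G ^^ n))"
  by (induction n) (auto simp: deg1_id degm1_comp2 degm1_comp1)

lemma deg1_shift_nat: "deg1 G \<Longrightarrow> G (t + 2*pi * real n) = G t + 2*pi * real n"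
proof (induction n)
  case (Suc n)
  have per: "G ((t + 2*pi * real n) + 2*pi) = G (t + 2*pi * real n) + 2*pi"
    using Suc.prems by (simp only: deg1_def)
  have "G (t + 2*pi * real (Suc n)) = G ((t + 2*pi * real n) + 2*pi)" by (simp add: algebra_simps)
  also have "\<dots> = G t + 2*pi * real n + 2*pi" using per Suc.IH[OF Suc.prems] by simp
  also have "\<dots> = G t + 2*pi * real (Suc n)" by (simp add: algebra_simps)
  finally show ?case .
qed simp

lemma deg1_shift: assumes "deg1 G" shows "G (t + 2*pi * of_int k) = G t + 2*pi * of_int k"
proof (cases "k \<ge> 0")
  case True
  then show ?thesis using deg1_shift_nat[OF assms, of t "nat k"] by simp
next
  case False
  define n where "n = nat (-k)"
  have kn: "of_int k = - real n" using False by (simp add: n_def)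
  have e1: "t + 2*pi * of_int k = t - 2*pi * real n" by (simp add: kn)
  have "G ((t - 2*pi * real n) + 2*pi * real n) = G (t - 2*pi * real n) + 2*pi * real n"
    by (rule deg1_shift_nat[OF assms])
  then have "G t = G (t - 2*pi * real n) + 2*pi * real n" by simp
  then show ?thesis unfolding e1 kn by simp
qed

lemma degm1_shift_nat: "degm1 G \<Longrightarrow> G (t + 2*pi * real n) = G t - 2*pi * real n"
proof (induction n)
  case (Suc n)
  have per: "G ((t + 2*pi * real n) + 2*pi) = G (t + 2*pi * real n) - 2*pi"
    using Suc.prems by (simp only: degm1_def)
  have "G (t + 2*pi * real (Suc n)) = G ((t + 2*pi * real n) + 2*pi)" by (simp add: algebra_simps)
  also have "\<dots> = G t - 2*pi * real n - 2*pi" using per Suc.IH[OF Suc.prems] by simp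
  also have "\<dots> = G t - 2*pi * real (Suc n)" by (simp add: algebra_simps)
  finally show ?case .
qed simp

lemma degm1_shift: assumes "degm1 G" shows "G (t + 2*pi * of_int k) = G t - 2*pi * of_int k"
proof (cases "k \<ge> 0")
  case True
  then show ?thesis using degm1_shift_nat[OF assms, of t "nat k"] by simp
next
  case False
  define n where "n = nat (-k)"
  have kn: "of_int k = - real n" using False by (simp add: n_def)
  have e1: "t + 2*pi * of_int k = t - 2*pi * real n" by (simp add: kn)
  have "G ((t - 2*pi * real n) + 2*pi * real n) = G (t - 2*pi * real n) - 2*pi * real n"
    by (rule degm1_shift_nat[OF assms])
  then have "G t = G (t - 2*pi * real n) - 2*pi * real n" by simp
  then show ?thesis unfolding e1 kn by simp
qed

lemma deg1_image:
  assumes "deg1 G" "c \<le> d" "d - c < 2*pi"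
  shows "G ` {c..d} = {G c..G d}" "G c \<le> G d" "G d - G c < 2*pi"
proof -
  have mono: "strict_mono G" and cont: "continuous_on UNIV G" using assms by (auto simp: deg1_def)
  show "G c \<le> G d" using mono assms(2) by (simp add: strict_mono_less_eq)
  have "G d < G (c + 2*pi)" using mono assms by (simp add: strict_mono_less)
  then show "G d - G c < 2*pi" using assms by (simp add: deg1_def)
  show "G ` {c..d} = {G c..G d}"
  proof
    show "G ` {c..d} \<subseteq> {G c..G d}" using mono by (auto simp: strict_mono_less_eq)
    show "{G c..G d} \<subseteq> G ` {c..d}"
    proof
      fix y assume "y \<in> {G c..G d}"
      have cc: "continuous_on {c..d} G" using cont continuous_on_subset by blast
      from \<open>y \<in> {G c..G d}\<close> obtain x where "c \<le> x" "x \<le> d" "G x = y"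
        using IVT'[of G c y d, OF _ _ assms(2) cc] by auto
      then show "y \<in> G ` {c..d}" by auto
    qed
  qed
qed

lemma degm1_image:
  assumes "degm1 G" "c \<le> d" "d - c < 2*pi"
  shows "G ` {c..d} = {G d..G c}" "G d \<le> G c" "G c - G d < 2*pi"
proof -
  have mono: "\<And>s t. s < t \<Longrightarrow> G t < G s" and cont: "continuous_on UNIV G" using assms by (auto simp: degm1_def)
  have mono': "s \<le> t \<Longrightarrow> G t \<le> G s" for s t using mono[of s t] by (cases "s = t") auto
  show "G d \<le> G c" using mono' assms by auto
  have "G (c + 2*pi) < G d" using mono assms by simp
  then show "G c - G d < 2*pi" using assms by (simp add: degm1_def)
  show "G ` {c..d} = {G d..G c}"
  proof
    show "G ` {c..d} \<subseteq> {G d..G c}" using mono' by auto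
    show "{G d..G c} \<subseteq> G ` {c..d}"
    proof
      fix y assume "y \<in> {G d..G c}"
      have cc: "continuous_on {c..d} G" using cont continuous_on_subset by blast
      from \<open>y \<in> {G d..G c}\<close> obtain x where "c \<le> x" "x \<le> d" "G x = y"
        using IVT2'[of G d y c, OF _ _ assms(2) cc] by auto
      then show "y \<in> G ` {c..d}" by auto
    qed
  qed
qed

lemma int_small_zero: "\<bar>2*pi * of_int (k::int)\<bar> < 2*pi \<Longrightarrow> k = 0"
proof -
  assume "\<bar>2*pi * of_int k\<bar> < 2*pi"
  then have "\<bar>of_int k\<bar> < (1::real)" using pi_gt_zero by (simp add: abs_mult)
  then show "k = 0" by linarith
qed

lemma deg1_fix_arc:
  assumes "deg1 G" "a \<le> b" "b < a + 2*pi" "cis (G a) = cis a" "cis (G b) = cis b"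
  shows "cis ` (G ` {a..b}) = cis ` {a..b}"
proof -
  obtain k::int where k: "G a = a + 2*pi * of_int k" using assms cis_eq_iff_int by blast
  obtain k'::int where k': "G b = b + 2*pi * of_int k'" using assms cis_eq_iff_int by blast
  have im: "G ` {a..b} = {G a..G b}" "G a \<le> G b" "G b - G a < 2*pi" using deg1_image[OF assms(1,2)] assms by auto
  have "2*pi * of_int (k' - k) < 2*pi" "- (2*pi) < 2*pi * of_int (k' - k)"
    using im(2,3) k k' assms(2,3) by (simp_all add: algebra_simps)
  then have "\<bar>2*pi * of_int (k' - k)\<bar> < 2*pi" by linarith
  then have "k' - k = 0" by (rule int_small_zero)
  then have "k' = k" by simp
  have "cis ` (G ` {a..b}) = cis ` {a + 2*pi * of_int k .. b + 2*pi * of_int k}"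
    using im(1) k k' \<open>k' = k\<close> by simp
  also have "\<dots> = cis ` {a..b}" by (rule cis_image_shift)
  finally show ?thesis .
qed

lemma lift_pow: "circle_lift f F \<Longrightarrow> (f ^^ n) (cis t) = cis ((F ^^ n) t)"
  by (induction n arbitrary: t) (auto simp: circle_lift_def)





lemma lift_period:
  assumes L: "circle_lift f F" and C: "continuous_on UNIV F"
  shows "\<exists>k::int. \<forall>t. F (t + 2*pi) = F t + 2*pi * of_int k"
proof -
  define g where "g t = F (t + 2*pi) - F t" for t
  have gk: "\<exists>k::int. g t = 2*pi * of_int k" for t
  proof -
    have "cis (F (t + 2*pi)) = f (cis (t + 2*pi))" using L by (simp add: circle_lift_def)
    also have "\<dots> = f (cis t)" by (metis cis_shift_int mult.right_neutral of_int_1)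
    also have "\<dots> = cis (F t)" using L by (simp add: circle_lift_def)
    finally obtain k::int where "F (t + 2*pi) = F t + 2*pi * of_int k" using cis_eq_iff_int by blast
    then show ?thesis unfolding g_def by (intro exI[of _ k]) simp
  qed
  have gc: "continuous_on UNIV g" unfolding g_def
    by (intro continuous_intros continuous_on_compose2[OF C]) auto
  have "g constant_on UNIV"
  proof (rule continuous_discrete_range_constant[OF connected_UNIV gc])
    fix x :: real
    show "\<exists>e>0. \<forall>y. y \<in> UNIV \<and> g y \<noteq> g x \<longrightarrow> e \<le> norm (g y - g x)"
    proof (intro exI[of _ "2*pi"] conjI allI impI)
      fix y assume "y \<in> UNIV \<and> g y \<noteq> g x"
      obtain ky::int where ky: "g y = 2*pi * of_int ky" using gk by blast
      obtain kx::int where kx: "g x = 2*pi * of_int kx" using gk by blast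
      have "ky \<noteq> kx" using ky kx \<open>y \<in> UNIV \<and> g y \<noteq> g x\<close> by auto
      then have "1 \<le> \<bar>of_int (ky - kx)::real\<bar>" by linarith
      then have "2*pi * 1 \<le> 2*pi * \<bar>of_int (ky - kx)\<bar>" by (intro mult_left_mono) auto
      moreover have "g y - g x = 2*pi * of_int (ky - kx)" using ky kx by (simp add: algebra_simps)
      ultimately show "2*pi \<le> norm (g y - g x)" by (simp add: abs_mult)
    qed simp
  qed
  then have "\<forall>t. g t = g 0" unfolding constant_on_def by auto
  moreover obtain k::int where "g 0 = 2*pi * of_int k" using gk by blast
  ultimately show ?thesis unfolding g_def by (intro exI[of _ k]) (auto simp: algebra_simps)
qed

lemma cis_ne_0_2pi: "0 < s \<Longrightarrow> s < 2*pi \<Longrightarrow> cis s \<noteq> cis 0"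
  using cis_gap[of 0 s 0] by auto

lemma preserving_deg1:
  assumes L: "circle_lift f F" and C: "continuous_on UNIV F" and M: "strict_mono F" and I: "inj_on f S1"
  shows "deg1 F"
proof -
  obtain k::int where k: "\<forall>t. F (t + 2*pi) = F t + 2*pi * of_int k" using lift_period[OF L C] by blast
  have "F 0 < F (0 + 2*pi)" using M by (simp add: strict_mono_less)
  then have "0 < 2*pi * of_int k" using k[rule_format, of 0] by linarith
  then have k1: "1 \<le> k" by (simp add: zero_less_mult_iff)
  have "k \<le> 1"
  proof (rule ccontr)
    assume "\<not> k \<le> 1"
    then have "(2::real) \<le> of_int k" by simp
    then have "2*pi*2 \<le> 2*pi * of_int k" by (intro mult_left_mono) auto
    then have F2: "F 0 + 2*pi < F (2*pi)" using k[rule_format, of 0] pi_gt_zero by simp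
    have cc: "continuous_on {0..2*pi} F" using C continuous_on_subset by blast
    obtain s where s: "0 \<le> s" "s \<le> 2*pi" "F s = F 0 + 2*pi"
      using IVT'[of F 0 "F 0 + 2*pi" "2*pi", OF _ _ _ cc] F2 by auto
    have "s \<noteq> 0" using s by auto
    moreover have "s \<noteq> 2*pi" using s F2 by auto
    ultimately have "cis s \<noteq> cis 0" using s cis_ne_0_2pi by auto
    moreover have "f (cis s) = f (cis 0)"
    proof -
      have "f (cis s) = cis (F s)" using L by (simp add: circle_lift_def)
      also have "\<dots> = cis (F 0)" using s(3) by (metis cis_shift_int mult.right_neutral of_int_1)
      also have "\<dots> = f (cis 0)" using L unfolding circle_lift_def by metis
      finally show ?thesis .
    qed
    ultimately show False using I by (meson cis_in_S1 inj_onD)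
  qed
  then have "k = 1" using k1 by simp
  then show ?thesis using k C M by (simp add: deg1_def)
qed

lemma reversing_degm1:
  assumes L: "circle_lift f F" and C: "continuous_on UNIV F" and M: "\<forall>s t. s < t \<longrightarrow> F t < F s" and I: "inj_on f S1"
  shows "degm1 F"
proof -
  obtain k::int where k: "\<forall>t. F (t + 2*pi) = F t + 2*pi * of_int k" using lift_period[OF L C] by blast
  have "F (0 + 2*pi) < F 0" using M by simp
  then have "2*pi * of_int k < 0" using k[rule_format, of 0] by linarith
  then have k1: "k \<le> -1" by (simp add: mult_less_0_iff)
  have "-1 \<le> k"
  proof (rule ccontr)
    assume "\<not> -1 \<le> k"
    then have "of_int k \<le> (-2::real)" by simp
    then have "2*pi * of_int k \<le> 2*pi*(-2)" by (intro mult_left_mono) auto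
    then have "2*pi * of_int k < -2*pi" using pi_gt_zero by linarith
    moreover have "F (0 + 2*pi) = F 0 + 2*pi * of_int k" using k by blast
    ultimately have F2: "F (2*pi) < F 0 - 2*pi" using pi_gt_zero by (simp add: algebra_simps)
    have cc: "continuous_on {0..2*pi} F" using C continuous_on_subset by blast
    obtain s where s: "0 \<le> s" "s \<le> 2*pi" "F s = F 0 - 2*pi"
      using IVT2'[of F "2*pi" "F 0 - 2*pi" 0, OF _ _ _ cc] F2 by auto
    have "s \<noteq> 0" using s by auto
    moreover have "s \<noteq> 2*pi" using s F2 by auto
    ultimately have "cis s \<noteq> cis 0" using s cis_ne_0_2pi by auto
    moreover have "f (cis s) = f (cis 0)"
    proof -
      have "f (cis s) = cis (F s)" using L by (simp add: circle_lift_def)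
      also have "\<dots> = cis (F 0 + 2*pi * of_int (-1))" using s(3) by simp
      also have "\<dots> = cis (F 0)" by (rule cis_shift_int)
      also have "\<dots> = f (cis 0)" using L unfolding circle_lift_def by metis
      finally show ?thesis .
    qed
    ultimately show False using I by (meson cis_in_S1 inj_onD)
  qed
  then have "k = -1" using k1 by simp
  then show ?thesis using k C M by (simp add: degm1_def)
qed




lemma cis_plus_2pi: "cis (x + 2*pi) = cis x"
  by (metis cis_shift_int mult.right_neutral of_int_1)

lemma cont_pow_UNIV: "continuous_on UNIV (F::real\<Rightarrow>real) \<Longrightarrow> continuous_on UNIV (F ^^ n)"
  by (induction n) (auto simp: continuous_on_id cont_comp_UNIV[of F "F^^n" for n, unfolded o_def])

lemma compact_cis_img: "compact (cis ` {x..y})"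
  by (intro compact_continuous_image continuous_intros) auto

lemma pos_dist_from_compact:
  assumes "compact K" "K \<noteq> {}" "closed A" "A \<noteq> {}" "K \<inter> A = {}"
  shows "\<exists>e>0. \<forall>z\<in>K. e \<le> infdist z A"
proof -
  have "continuous_on K (\<lambda>z. infdist z A)" by (intro continuous_intros)
  then obtain z0 where z0: "z0 \<in> K" "\<forall>z\<in>K. infdist z0 A \<le> infdist z A"
    using continuous_attains_inf[OF assms(1,2)] by blast
  have "infdist z0 A > 0" using z0 assms by (intro infdist_pos_not_in_closed) auto
  then show ?thesis using z0 by blast
qed

lemma endpoint_data:
  assumes L: "circle_lift f F" and C: "continuous_on UNIV F"
    and Aeq: "A = cis ` {a..b}" and ab: "a \<le> b" "b < a + 2*pi"
    and NW: "A \<in> nonwandering_set hausdorff_dist hyperspace_C (induced_map f)"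
    and dpos: "\<delta> > 0"
  shows "\<exists>n c d c' d'. n \<ge> 1 \<and> \<bar>c - a\<bar> < \<delta> \<and> \<bar>d - b\<bar> < \<delta> \<and> \<bar>c' - a\<bar> < \<delta> \<and> \<bar>d' - b\<bar> < \<delta>
     \<and> c \<le> d \<and> d - c < 2*pi \<and> c' \<le> d' \<and> d' - c' < 2*pi \<and> cis ` ((F ^^ n) ` {c..d}) = cis ` {c'..d'}"
proof -
  define \<delta>0 where "\<delta>0 = min \<delta> ((2*pi - (b - a))/3)"
  have d03: "3 * \<delta>0 \<le> 2*pi - (b - a)"
    using min.cobounded2[of \<delta> "(2*pi - (b - a))/3"] unfolding \<delta>0_def by (simp add: field_simps)
  have "0 < \<delta>0" "\<delta>0 \<le> \<delta>" using dpos ab unfolding \<delta>0_def by auto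
  note d0 = this d03
  have AC: "A \<in> hyperspace_C" using NW by (simp add: nonwandering_set_def)
  then have A_S1: "A \<subseteq> S1" "A \<noteq> {}" by (auto simp: hyperspace_C_def)
  have Aclosed: "closed A" unfolding Aeq by (intro compact_imp_closed compact_cis_img)
  define Kc where "Kc = cis ` {b+\<delta>0 .. a-\<delta>0+2*pi}"
  have Kc_disj: "Kc \<inter> A = {}"
  proof -
    have "cis t \<notin> cis ` {a..b}" if "t \<in> {b+\<delta>0 .. a-\<delta>0+2*pi}" for t
      using that d0 by (intro cis_gap) auto
    then show ?thesis unfolding Kc_def Aeq by blast
  qed
  have Kne: "Kc \<noteq> {}" unfolding Kc_def using d0 by auto
  have Kcomp: "compact Kc" unfolding Kc_def by (rule compact_cis_img)
  obtain e1 where e1: "e1 > 0" "\<forall>z\<in>Kc. e1 \<le> infdist z A"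
    using pos_dist_from_compact[OF Kcomp Kne Aclosed A_S1(2) Kc_disj] by blast
  have toV: "z \<in> cis ` {a-\<delta>0<..<b+\<delta>0}" if zS: "z \<in> S1" and zi: "infdist z A < e1" for z
  proof -
    obtain t where t: "t \<in> {a-\<delta>0..<a-\<delta>0+2*pi}" "z = cis t" using S1_cis_from[OF zS] by blast
    have "z \<notin> Kc" using e1 zi by auto
    show ?thesis
    proof (cases "t = a - \<delta>0")
      case True
      then have "z = cis (a - \<delta>0 + 2*pi)" using t cis_plus_2pi by simp
      then have "z \<in> Kc" unfolding Kc_def using d0 by auto
      then show ?thesis using \<open>z \<notin> Kc\<close> by blast
    next
      case False
      have "t < b + \<delta>0"
      proof (rule ccontr)
        assume "\<not> t < b + \<delta>0"
        then have "z \<in> Kc" unfolding Kc_def using t by auto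
        then show False using \<open>z \<notin> Kc\<close> by blast
      qed
      then show ?thesis using t False by auto
    qed
  qed
  define W1 where "W1 = cis ` {a+\<delta>0..b+\<delta>0}"
  have W1: "closed W1" "W1 \<noteq> {}" "cis a \<notin> W1"
  proof -
    show "closed W1" unfolding W1_def by (intro compact_imp_closed compact_cis_img)
    show "W1 \<noteq> {}" unfolding W1_def using ab by auto
    have "cis (a + 2*pi) \<notin> W1" unfolding W1_def using d0 ab by (intro cis_gap) auto
    then show "cis a \<notin> W1" by (simp add: cis_plus_2pi)
  qed
  define e2 where "e2 = infdist (cis a) W1"
  have e2: "e2 > 0" unfolding e2_def using W1 by (intro infdist_pos_not_in_closed) auto
  define W2 where "W2 = cis ` {a-\<delta>0..b-\<delta>0}"
  have W2: "closed W2" "W2 \<noteq> {}" "cis b \<notin> W2"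
  proof -
    show "closed W2" unfolding W2_def by (intro compact_imp_closed compact_cis_img)
    show "W2 \<noteq> {}" unfolding W2_def using ab by auto
    show "cis b \<notin> W2" unfolding W2_def using d0 ab by (intro cis_gap) auto
  qed
  define e3 where "e3 = infdist (cis b) W2"
  have e3: "e3 > 0" unfolding e3_def using W2 by (intro infdist_pos_not_in_closed) auto
  define e where "e = min e1 (min e2 e3)"
  have e: "e > 0" "e \<le> e1" "e \<le> e2" "e \<le> e3" using e1 e2 e3 unfolding e_def by auto
  have aA: "cis a \<in> A" "cis b \<in> A" unfolding Aeq using ab by auto
  have close_arc: "\<exists>c d. \<bar>c - a\<bar> < \<delta>0 \<and> \<bar>d - b\<bar> < \<delta>0 \<and> c \<le> d \<and> d - c < 2*pi \<and> B = cis ` {c..d}"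
    if B: "B \<subseteq> S1" "B \<noteq> {}" "compact B" "connected B" "hausdorff_dist A B < e" for B
  proof -
    have h1: "\<forall>x\<in>A. infdist x B < e" "\<forall>y\<in>B. infdist y A < e"
      using hd_lt[OF A_S1 B(1,2) B(5)] by auto
    have "B \<subseteq> cis ` {a-\<delta>0<..<b+\<delta>0}"
    proof
      fix y assume "y \<in> B"
      then have "y \<in> S1" "infdist y A < e1" using h1(2) e(2) B(1) by force+
      then show "y \<in> cis ` {a-\<delta>0<..<b+\<delta>0}" by (rule toV)
    qed
    from arc_classify_open[OF _ _ this B(2,3,4)] obtain c d where
      cd: "a - \<delta>0 < c" "c \<le> d" "d < b + \<delta>0" "B = cis ` {c..d}" using d0 ab by auto
    have "c < a + \<delta>0"
    proof (rule ccontr)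
      assume "\<not> c < a + \<delta>0"
      then have "B \<subseteq> W1" unfolding W1_def cd(4) using cd by auto
      then have "infdist (cis a) W1 \<le> infdist (cis a) B" using B(2) by (rule infdist_mono)
      moreover have "infdist (cis a) B < e" using h1(1) aA(1) by blast
      ultimately show False using e(3) unfolding e2_def by linarith
    qed
    moreover have "b - \<delta>0 < d"
    proof (rule ccontr)
      assume "\<not> b - \<delta>0 < d"
      then have "B \<subseteq> W2" unfolding W2_def cd(4) using cd by auto
      then have "infdist (cis b) W2 \<le> infdist (cis b) B" using B(2) by (rule infdist_mono)
      moreover have "infdist (cis b) B < e" using h1(1) aA(2) by blast
      ultimately show False using e(4) unfolding e3_def by linarith
    qed
    moreover have "d - c < 2*pi" using cd d0 ab by linarith
    ultimately have "\<bar>c - a\<bar> < \<delta>0" "\<bar>d - b\<bar> < \<delta>0" "d - c < 2*pi" using cd by linarith+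
    then show ?thesis using cd(2,4) by blast
  qed
  obtain B n where Bn: "B \<in> hyperspace_C" "n \<ge> 1" "hausdorff_dist A B < e"
     "hausdorff_dist A ((induced_map f ^^ n) B) < e"
    using NW e unfolding nonwandering_set_def by blast
  have BC: "B \<subseteq> S1" "B \<noteq> {}" "compact B" "connected B" using Bn by (auto simp: hyperspace_C_def)
  obtain c d where cd: "\<bar>c - a\<bar> < \<delta>0" "\<bar>d - b\<bar> < \<delta>0" "c \<le> d" "d - c < 2*pi" "B = cis ` {c..d}"
    using close_arc[OF BC Bn(3)] by blast
  have img: "(induced_map f ^^ n) B = cis ` ((F ^^ n) ` {c..d})"
  proof -
    have "(induced_map f ^^ n) B = (f ^^ n) ` (cis ` {c..d})" unfolding induced_pow cd(5) ..
    also have "\<dots> = (\<lambda>t. cis ((F ^^ n) t)) ` {c..d}" by (simp add: image_image lift_pow[OF L])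
    also have "\<dots> = cis ` ((F ^^ n) ` {c..d})" by (simp add: image_image)
    finally show ?thesis .
  qed
  have contn: "continuous_on UNIV (cis \<circ> (F ^^ n))"
    using cont_pow_UNIV[OF C, of n] by (intro continuous_on_compose) (auto intro: continuous_intros)
  have B'C: "cis ` ((F ^^ n) ` {c..d}) \<subseteq> S1" "cis ` ((F ^^ n) ` {c..d}) \<noteq> {}"
     "compact (cis ` ((F ^^ n) ` {c..d}))" "connected (cis ` ((F ^^ n) ` {c..d}))"
  proof -
    have eq: "cis ` ((F ^^ n) ` {c..d}) = (cis \<circ> (F ^^ n)) ` {c..d}" by (simp add: image_comp)
    show "cis ` ((F ^^ n) ` {c..d}) \<subseteq> S1" by auto
    show "cis ` ((F ^^ n) ` {c..d}) \<noteq> {}" using cd by auto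
    show "compact (cis ` ((F ^^ n) ` {c..d}))" unfolding eq
      by (intro compact_continuous_image continuous_on_subset[OF contn]) auto
    show "connected (cis ` ((F ^^ n) ` {c..d}))" unfolding eq
      by (intro connected_continuous_image continuous_on_subset[OF contn]) auto
  qed
  obtain c' d' where cd': "\<bar>c' - a\<bar> < \<delta>0" "\<bar>d' - b\<bar> < \<delta>0" "c' \<le> d'" "d' - c' < 2*pi"
      "cis ` ((F ^^ n) ` {c..d}) = cis ` {c'..d'}"
    using close_arc[OF B'C] Bn(4) img by auto
  have "\<bar>c - a\<bar> < \<delta>" "\<bar>d - b\<bar> < \<delta>" "\<bar>c' - a\<bar> < \<delta>" "\<bar>d' - b\<bar> < \<delta>"
    using cd(1,2) cd'(1,2) d0(2) by linarith+
  then show ?thesis using cd(3,4) cd'(3,4,5) Bn(2) by blast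
qed




lemma pow_arc_image: "circle_lift f F \<Longrightarrow> (induced_map f ^^ n) (cis ` X) = cis ` ((F ^^ n) ` X)"
proof -
  assume L: "circle_lift f F"
  have "(induced_map f ^^ n) (cis ` X) = (f ^^ n) ` (cis ` X)" unfolding induced_pow ..
  also have "\<dots> = (\<lambda>t. cis ((F ^^ n) t)) ` X" by (simp add: image_image lift_pow[OF L])
  also have "\<dots> = cis ` ((F ^^ n) ` X)" by (simp add: image_image)
  finally show ?thesis .
qed

lemma S1_in_C: "S1 \<in> hyperspace_C"
proof -
  have "cis 0 \<in> S1" by (rule cis_in_S1)
  then have "S1 \<noteq> {}" by blast
  moreover have "compact S1" unfolding S1_def by simp
  moreover have "connected S1" unfolding S1_def by (rule connected_sphere) simp
  ultimately show ?thesis unfolding hyperspace_C_def by auto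
qed

lemma nw_of_returns:
  assumes "\<And>\<epsilon>. \<epsilon> > 0 \<Longrightarrow> \<exists>n s s'. n \<ge> 1 \<and> \<bar>s - a\<bar> < \<epsilon> \<and> \<bar>s' - a\<bar> < \<epsilon> \<and> (f ^^ n) (cis s) = cis s'"
  shows "cis a \<in> nonwandering_set dist S1 f"
  unfolding nonwandering_set_def
proof (intro CollectI conjI allI impI)
  show "cis a \<in> S1" by simp
  fix \<epsilon> :: real assume "\<epsilon> > 0"
  then obtain n s s' where nss: "n \<ge> 1" "\<bar>s - a\<bar> < \<epsilon>" "\<bar>s' - a\<bar> < \<epsilon>" "(f ^^ n) (cis s) = cis s'"
    using assms by blast
  have "dist (cis a) (cis s) < \<epsilon>" using dist_cis_le[of a s] nss(2) by linarith
  moreover have "dist (cis a) ((f ^^ n) (cis s)) < \<epsilon>" using dist_cis_le[of a s'] nss(3,4) by simp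
  ultimately show "\<exists>y\<in>S1. \<exists>n\<ge>1. dist (cis a) y < \<epsilon> \<and> dist (cis a) ((f ^^ n) y) < \<epsilon>"
    using nss(1) by (intro bexI[of _ "cis s"] exI[of _ n]) auto
qed

lemma pres_endpoints_nw:
  assumes L: "circle_lift f F" and D: "deg1 F"
    and Aeq: "A = cis ` {a..b}" and ab: "a \<le> b" "b < a + 2*pi"
    and NW: "A \<in> nonwandering_set hausdorff_dist hyperspace_C (induced_map f)"
  shows "cis a \<in> nonwandering_set dist S1 f" "cis b \<in> nonwandering_set dist S1 f"
proof -
  have C: "continuous_on UNIV F" using D by (simp add: deg1_def)
  have key: "\<exists>n c d c' d'. n \<ge> 1 \<and> \<bar>c - a\<bar> < \<epsilon> \<and> \<bar>d - b\<bar> < \<epsilon> \<and> \<bar>c' - a\<bar> < \<epsilon> \<and> \<bar>d' - b\<bar> < \<epsilon>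
     \<and> (f ^^ n) (cis c) = cis c' \<and> (f ^^ n) (cis d) = cis d'" if eps: "\<epsilon> > 0" for \<epsilon>
  proof -
    obtain n c d c' d' where nd: "n \<ge> 1" "\<bar>c - a\<bar> < \<epsilon>" "\<bar>d - b\<bar> < \<epsilon>" "\<bar>c' - a\<bar> < \<epsilon>" "\<bar>d' - b\<bar> < \<epsilon>"
      "c \<le> d" "d - c < 2*pi" "c' \<le> d'" "d' - c' < 2*pi" "cis ` ((F ^^ n) ` {c..d}) = cis ` {c'..d'}"
      using endpoint_data[OF L C Aeq ab NW \<open>\<epsilon> > 0\<close>] by blast
    have Dn: "deg1 (F ^^ n)" using D by (rule deg1_pow)
    note im = deg1_image[OF Dn nd(6,7)]
    have "cis ((F ^^ n) c) = cis c' \<and> cis ((F ^^ n) d) = cis d'"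
      using nd(10) im nd(8,9) by (intro arc_unique_cis) auto
    then show ?thesis using nd(1-5) lift_pow[OF L] by metis
  qed
  show "cis a \<in> nonwandering_set dist S1 f"
    by (rule nw_of_returns) (use key in blast)
  show "cis b \<in> nonwandering_set dist S1 f"
    by (rule nw_of_returns) (use key in blast)
qed

lemma part_i:
  assumes MS: "morse_smale f" and OP: "orientation_preserving f"
    and PER: "\<forall>p \<in> periodic_points S1 f. p \<in> per_points S1 f N"
  shows "nonwandering_set hausdorff_dist hyperspace_C (induced_map f) =
           per_points hyperspace_C (induced_map f) N \<union> {S1}"
proof -
  obtain F where F: "continuous_on UNIV F" "circle_lift f F" "strict_mono F"
    using OP unfolding orientation_preserving_def by blast
  have diffeo: "f ` S1 = S1" "inj_on f S1" using MS by (auto simp: morse_smale_def circle_C1_diffeo_def)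
  have D: "deg1 F" using preserving_deg1[OF F(2,1,3) diffeo(2)] .
  have NWf: "nonwandering_set dist S1 f \<subseteq> periodic_points S1 f" using MS by (simp add: morse_smale_def)
  show ?thesis
  proof
    show "nonwandering_set hausdorff_dist hyperspace_C (induced_map f) \<subseteq> per_points hyperspace_C (induced_map f) N \<union> {S1}"
    proof
      fix A assume NW: "A \<in> nonwandering_set hausdorff_dist hyperspace_C (induced_map f)"
      have AC: "A \<in> hyperspace_C" using NW by (simp add: nonwandering_set_def)
      show "A \<in> per_points hyperspace_C (induced_map f) N \<union> {S1}"
      proof (cases "A = S1")
        case True then show ?thesis by simp
      next
        case False
        obtain a b where ab: "a \<le> b" "b < a + 2*pi" "A = cis ` {a..b}" using arc_classify[OF AC False] by blast
        have ep: "cis a \<in> per_points S1 f N" "cis b \<in> per_points S1 f N"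
          using pres_endpoints_nw[OF F(2) D ab(3) ab(1,2) NW] NWf PER by blast+
        then have N0: "0 < N" and fa: "(f ^^ N) (cis a) = cis a" and fb: "(f ^^ N) (cis b) = cis b"
          and least: "\<And>j. 0 < j \<Longrightarrow> j < N \<Longrightarrow> (f ^^ j) (cis a) \<noteq> cis a"
          by (auto simp: per_points_def)
        have DN: "deg1 (F ^^ N)" using D by (rule deg1_pow)
        have "cis ((F ^^ N) a) = cis a" "cis ((F ^^ N) b) = cis b"
          using fa fb lift_pow[OF F(2)] by metis+
        then have "cis ` ((F ^^ N) ` {a..b}) = cis ` {a..b}" using deg1_fix_arc[OF DN ab(1,2)] by blast
        then have fixN: "(induced_map f ^^ N) A = A" unfolding ab(3) pow_arc_image[OF F(2)] .
        have notj: "(induced_map f ^^ j) A \<noteq> A" if j: "0 < j" "j < N" for j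
        proof
          assume "(induced_map f ^^ j) A = A"
          then have eq: "cis ` ((F ^^ j) ` {a..b}) = cis ` {a..b}" unfolding ab(3) pow_arc_image[OF F(2)] .
          have Dj: "deg1 (F ^^ j)" using D by (rule deg1_pow)
          note im = deg1_image[OF Dj ab(1)] 
          have "cis ((F ^^ j) a) = cis a" using eq im ab by (intro arc_unique_cis[THEN conjunct1]) auto
          then have "(f ^^ j) (cis a) = cis a" using lift_pow[OF F(2)] by metis
          then show False using least j by blast
        qed
        have "A \<in> per_points hyperspace_C (induced_map f) N"
          unfolding per_points_def using AC N0 fixN notj by blast
        then show ?thesis by blast
      qed
    qed
  next
    show "per_points hyperspace_C (induced_map f) N \<union> {S1} \<subseteq> nonwandering_set hausdorff_dist hyperspace_C (induced_map f)"
    proof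
      fix A assume "A \<in> per_points hyperspace_C (induced_map f) N \<union> {S1}"
      then consider "A \<in> per_points hyperspace_C (induced_map f) N" | "A = S1" by blast
      then show "A \<in> nonwandering_set hausdorff_dist hyperspace_C (induced_map f)"
      proof cases
        case 1
        then have "A \<in> hyperspace_C" "0 < N" "(induced_map f ^^ N) A = A" by (auto simp: per_points_def)
        moreover have "hausdorff_dist A A = 0" using \<open>A \<in> hyperspace_C\<close> by (intro hd_self) (auto simp: hyperspace_C_def)
        ultimately show ?thesis by (rule periodic_nonwandering)
      next
        case 2
        have P: "(induced_map f ^^ 1) S1 = S1" using diffeo(1) by (simp add: induced_map_def)
        have H: "hausdorff_dist S1 S1 = 0" using S1_in_C by (intro hd_self) (auto simp: hyperspace_C_def)
        have "S1 \<in> nonwandering_set hausdorff_dist hyperspace_C (induced_map f)"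
          by (rule periodic_nonwandering[of S1 hyperspace_C 1 "induced_map f" hausdorff_dist, OF S1_in_C _ P H]) simp
        then show ?thesis unfolding \<open>A = S1\<close> .
      qed
    qed
  qed
qed




lemma deg1_pow_fix: "G t = t \<Longrightarrow> (G ^^ m) t = t"
  by (induction m) auto

lemma AL_pos:
  assumes D: "deg1 H" and t0: "H t0 = t0" and t1: "H t1 = t1"
    and dst: "\<forall>k::int. t1 \<noteq> t0 + 2*pi * of_int k" and Ha: "H a > a"
  shows "\<exists>\<eta>>0. \<forall>c m1 x' m2 (j::int). \<bar>c - a\<bar> < \<eta> \<longrightarrow> \<bar>x' - H ((H ^^ m1) c)\<bar> < \<eta> \<longrightarrow>
            \<bar>(H ^^ m2) x' - (a + 2*pi * of_int j)\<bar> < \<eta> \<longrightarrow> False"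
proof -
  have cont: "continuous_on UNIV H" and mono: "strict_mono H" using D by (auto simp: deg1_def)
  have monole: "x \<le> y \<Longrightarrow> H x \<le> H y" for x y using mono by (simp add: strict_mono_less_eq)
  have fixk: "H (t + 2*pi * of_int k) = t + 2*pi * of_int k" if "H t = t" for t k
    using deg1_shift[OF D, of t k] that by simp
  have clos: "closed {t. H t = t}" using cont by (intro closed_Collect_eq) (auto intro: continuous_on_id)
  define S2 where "S2 = {t. H t = t} \<inter> {a..}"
  define k2 where "k2 = \<lceil>(a - t0) / (2*pi)\<rceil>"
  have "(a - t0) / (2*pi) \<le> of_int k2" unfolding k2_def by simp
  then have "a - t0 \<le> 2*pi * of_int k2" using pi_gt_zero by (simp add: field_simps)
  then have "t0 + 2*pi * of_int k2 \<in> S2" unfolding S2_def using fixk[OF t0] by auto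
  then have S2ne: "S2 \<noteq> {}" by blast
  have S2bdd: "bdd_below S2" unfolding S2_def by (auto intro: bdd_belowI[of _ a])
  have S2cl: "closed S2" unfolding S2_def using clos by (intro closed_Int) auto
  define q2 where "q2 = Inf S2"
  have q2S: "q2 \<in> S2" unfolding q2_def using S2ne S2bdd S2cl by (rule closed_contains_Inf)
  have Hq2: "H q2 = q2" and aq2: "a \<le> q2" using q2S unfolding S2_def by auto
  have aq2': "a < q2" using aq2 Hq2 Ha by (cases "a = q2") auto
  have nofix2: "H t \<noteq> t" if "a \<le> t" "t < q2" for t
  proof
    assume "H t = t"
    then have "t \<in> S2" unfolding S2_def using that by auto
    then have "q2 \<le> t" unfolding q2_def using S2bdd by (rule cInf_lower)
    then show False using that by simp
  qed
  define S1' where "S1' = {t. H t = t} \<inter> {..a}"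
  define k1 where "k1 = \<lfloor>(a - t0) / (2*pi)\<rfloor>"
  have "of_int k1 \<le> (a - t0) / (2*pi)" "(a - t0) / (2*pi) < of_int k1 + 1" unfolding k1_def by simp_all
  then have k1a: "2*pi * of_int k1 \<le> a - t0" "a - t0 < 2*pi * of_int k1 + 2*pi" using pi_gt_zero by (simp_all add: field_simps)
  then have p1: "t0 + 2*pi * of_int k1 \<in> S1'" unfolding S1'_def using fixk[OF t0] by auto
  then have S1ne: "S1' \<noteq> {}" by blast
  have S1bdd: "bdd_above S1'" unfolding S1'_def by (auto intro: bdd_aboveI[of _ a])
  have S1cl: "closed S1'" unfolding S1'_def using clos by (intro closed_Int) auto
  define q1 where "q1 = Sup S1'"
  have q1S: "q1 \<in> S1'" unfolding q1_def using S1ne S1bdd S1cl by (rule closed_contains_Sup)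
  have Hq1: "H q1 = q1" and q1a: "q1 \<le> a" using q1S unfolding S1'_def by auto
  have q1a': "q1 < a" using q1a Hq1 Ha by (cases "a = q1") auto
  have "t0 + 2*pi * of_int k1 \<le> q1" unfolding q1_def by (rule cSup_upper[OF p1 S1bdd])
  then have q1low: "a - 2*pi < q1" using k1a by linarith
  have nofix1: "H t \<noteq> t" if "q1 < t" "t \<le> a" for t
  proof
    assume "H t = t"
    then have "t \<in> S1'" unfolding S1'_def using that by auto
    then have "t \<le> q1" unfolding q1_def using S1bdd by (rule cSup_upper)
    then show False using that by simp
  qed
  have nofix: "H t \<noteq> t" if "q1 < t" "t < q2" for t
    using nofix1 nofix2 that by (cases "t \<le> a") auto
  have Hq12: "H (q1 + 2*pi) = q1 + 2*pi" using fixk[OF Hq1, of 1] by simp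
  have "q1 + 2*pi \<in> S2" unfolding S2_def using Hq12 q1low by auto
  then have q2le: "q2 \<le> q1 + 2*pi" unfolding q2_def using S2bdd by (rule cInf_lower)
  have rep: "\<exists>k::int. q1 \<le> x + 2*pi * of_int k \<and> x + 2*pi * of_int k < q1 + 2*pi" for x
  proof -
    define k where "k = \<lceil>(q1 - x) / (2*pi)\<rceil>"
    have "(q1 - x) / (2*pi) \<le> of_int k" "of_int k < (q1 - x) / (2*pi) + 1" unfolding k_def
      using ceiling_correct[of "(q1 - x) / (2*pi)"] by linarith+
    then have "q1 - x \<le> 2*pi * of_int k" "2*pi * of_int k < q1 - x + 2*pi" using pi_gt_zero by (simp_all add: field_simps)
    then show ?thesis by (intro exI[of _ k]) auto
  qed
  have q2lt: "q2 < q1 + 2*pi"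
  proof (rule ccontr)
    assume "\<not> q2 < q1 + 2*pi"
    then have eq: "q2 = q1 + 2*pi" using q2le by simp
    have onlyq1: "y = q1" if "H y = y" "q1 \<le> y" "y < q1 + 2*pi" for y
      using nofix[of y] that eq by (cases "y = q1") auto
    obtain ka::int where ka: "q1 \<le> t0 + 2*pi * of_int ka" "t0 + 2*pi * of_int ka < q1 + 2*pi" using rep by blast
    obtain kb::int where kb: "q1 \<le> t1 + 2*pi * of_int kb" "t1 + 2*pi * of_int kb < q1 + 2*pi" using rep by blast
    have "t0 + 2*pi * of_int ka = q1" using onlyq1 ka fixk[OF t0] by blast
    moreover have "t1 + 2*pi * of_int kb = q1" using onlyq1 kb fixk[OF t1] by blast
    ultimately have "t1 = t0 + 2*pi * of_int (ka - kb)" by (simp add: algebra_simps)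
    then show False using dst by blast
  qed
  define \<phi> where "\<phi> t = H t - t" for t
  have phic: "continuous_on UNIV \<phi>" unfolding \<phi>_def using cont by (intro continuous_intros) auto
  have pos: "H t > t" if "q1 < t" "t < q2" for t
  proof (rule ccontr)
    assume "\<not> H t > t"
    then have pt: "\<phi> t \<le> 0" unfolding \<phi>_def by simp
    have pa: "0 \<le> \<phi> a" unfolding \<phi>_def using Ha by simp
    show False
    proof (cases "a \<le> t")
      case True
      obtain x where "a \<le> x" "x \<le> t" "\<phi> x = 0"
        using IVT2'[of \<phi> t 0 a, OF pt pa True continuous_on_subset[OF phic]] by auto
      then show False using nofix[of x] that q1a' unfolding \<phi>_def by auto
    next
      case False
      obtain x where "t \<le> x" "x \<le> a" "\<phi> x = 0"
        using IVT'[of \<phi> t 0 a, OF pt pa _ continuous_on_subset[OF phic]] False by auto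
      then show False using nofix[of x] that aq2' unfolding \<phi>_def by auto
    qed
  qed
  have inv1: "t \<le> (H ^^ m) t \<and> (H ^^ m) t \<le> q2" if "q1 < t" "t \<le> q2" for t m
  proof (induction m)
    case 0 then show ?case using that by simp
  next
    case (Suc m)
    define u where "u = (H ^^ m) t"
    have u: "t \<le> u" "u \<le> q2" using Suc unfolding u_def by auto
    have "u \<le> H u" using pos[of u] u that Hq2 by (cases "u = q2") auto
    moreover have "H u \<le> q2" using monole[OF u(2)] Hq2 by simp
    ultimately show ?case using u unfolding u_def by simp
  qed
  have inv2: "q2 \<le> (H ^^ m) t \<and> (H ^^ m) t \<le> q1 + 2*pi" if "q2 \<le> t" "t \<le> q1 + 2*pi" for t m
  proof (induction m)
    case 0 then show ?case using that by simp
  next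
    case (Suc m)
    then have "q2 \<le> H ((H ^^ m) t)" "H ((H ^^ m) t) \<le> q1 + 2*pi"
      using monole[of q2 "(H ^^ m) t"] monole[of "(H ^^ m) t" "q1 + 2*pi"] Hq2 Hq12 by auto
    then show ?case by simp
  qed
  define \<mu> where "\<mu> = H a - a"
  have mu: "\<mu> > 0" unfolding \<mu>_def using Ha by simp
  obtain \<rho> where rho: "\<rho> > 0" "\<And>t. dist t a < \<rho> \<Longrightarrow> dist (\<phi> t) (\<phi> a) < \<mu>/2"
    using phic mu unfolding continuous_on_iff by (metis UNIV_I half_gt_zero)
  have near: "H t - t > \<mu>/2" if "\<bar>t - a\<bar> < \<rho>" for t
  proof -
    have "\<bar>\<phi> t - \<phi> a\<bar> < \<mu>/2" using rho(2)[of t] that by (simp add: dist_real_def)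
    then show ?thesis unfolding \<phi>_def \<mu>_def abs_less_iff by argo
  qed
  define \<eta> where "\<eta> = min (min ((a - q1)/4) ((q2 - a)/4)) (min ((q1 + 2*pi - q2)/2) (min (\<rho>/2) (min (\<mu>/6) 1)))"
  have eta0: "\<eta> > 0" unfolding \<eta>_def using q1a' aq2' q2lt rho mu by auto
  have "\<eta> \<le> (a - q1)/4" "\<eta> \<le> (q2 - a)/4" "\<eta> \<le> (q1 + 2*pi - q2)/2" "\<eta> \<le> \<rho>/2" "\<eta> \<le> \<mu>/6" "\<eta> \<le> 1"
    unfolding \<eta>_def by (simp_all only: min_le_iff_disj order_refl simp_thms)
  then have "4*\<eta> \<le> a - q1" "4*\<eta> \<le> q2 - a" "2*\<eta> \<le> q1 + 2*pi - q2" "2*\<eta> \<le> \<rho>" "6*\<eta> \<le> \<mu>" "\<eta> \<le> 1"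
    by (simp_all add: le_divide_eq)
  note eta = eta0 this
  show ?thesis
  proof (intro exI[of _ \<eta>] conjI allI impI)
    show "\<eta> > 0" by (rule eta(1))
    fix c m1 x' m2 and j :: int
    assume c: "\<bar>c - a\<bar> < \<eta>" and x: "\<bar>x' - H ((H ^^ m1) c)\<bar> < \<eta>"
      and v: "\<bar>(H ^^ m2) x' - (a + 2*pi * of_int j)\<bar> < \<eta>"
    note basics = q1a' aq2' q2lt q2le
    have cL: "a - \<eta> < c" "c < a + \<eta>" using c unfolding abs_less_iff by linarith+
    define w where "w = (H ^^ m1) c"
    have cq1: "q1 < c" using cL eta basics by linarith
    have cq2: "c \<le> q2" using cL eta basics by linarith
    note cq = cq1 cq2
    have w: "c \<le> w" "w \<le> q2" using inv1[OF cq] unfolding w_def by auto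
    have Hw: "w \<le> H w" "H w \<le> q2" using inv1[of w 1] w cq by auto
    define v where "v = (H ^^ m2) x'"
    have vb: "a - 2*\<eta> < v" "v \<le> q1 + 2*pi" "x' \<le> q2 \<longrightarrow> x' \<le> v" "q2 < x' \<longrightarrow> q2 \<le> v"
    proof -
      have xw0: "\<bar>x' - H w\<bar> < \<eta>" using x unfolding w_def .
      have xw: "H w - \<eta> < x'" "x' < H w + \<eta>" using xw0 unfolding abs_less_iff by linarith+
      show "x' \<le> q2 \<longrightarrow> x' \<le> v"
      proof
        assume "x' \<le> q2"
        moreover have "q1 < x'" using xw Hw w cL eta basics by linarith
        ultimately show "x' \<le> v" using inv1[of x' m2] unfolding v_def by auto
      qed
      show "q2 < x' \<longrightarrow> q2 \<le> v"
      proof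
        assume "q2 < x'"
        moreover have "x' \<le> q1 + 2*pi" using xw Hw eta basics by linarith
        ultimately show "q2 \<le> v" using inv2[of x' m2] unfolding v_def by auto
      qed
      show "v \<le> q1 + 2*pi"
      proof (cases "x' \<le> q2")
        case True
        moreover have "q1 < x'" using xw Hw w cL eta basics by linarith
        ultimately show ?thesis using inv1[of x' m2] q2le unfolding v_def by auto
      next
        case False
        moreover have "x' \<le> q1 + 2*pi" using xw Hw eta basics by linarith
        ultimately show ?thesis using inv2[of x' m2] unfolding v_def by auto
      qed
      show "a - 2*\<eta> < v"
      proof (cases "x' \<le> q2")
        case True
        moreover have "q1 < x'" using xw Hw w cL eta basics by linarith
        ultimately have "x' \<le> v" using inv1[of x' m2] unfolding v_def by auto
        moreover have "a - 2*\<eta> < x'" using xw Hw w cL basics by linarith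
        ultimately show ?thesis using basics by linarith
      next
        case False
        moreover have "x' \<le> q1 + 2*pi" using xw Hw eta basics by linarith
        ultimately have "q2 \<le> v" using inv2[of x' m2] unfolding v_def by auto
        then show ?thesis using aq2' eta basics by linarith
      qed
    qed
    have vj0: "\<bar>v - (a + 2*pi * of_int j)\<bar> < \<eta>" using v unfolding v_def .
    have vj: "a + 2*pi * of_int j - \<eta> < v" "v < a + 2*pi * of_int j + \<eta>" using vj0 unfolding abs_less_iff by linarith+
    have "\<bar>2*pi * of_int j\<bar> < 2*pi"
    proof -
      have "2*pi * of_int j < 2*pi" using vj vb(2) eta q1a' basics by linarith
      moreover have "- (2*pi) < 2*pi * of_int j" using vj vb(1) eta pi_ge_two basics by linarith
      ultimately show ?thesis by (simp add: abs_less_iff)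
    qed
    then have "j = 0" by (rule int_small_zero)
    then have va: "a - \<eta> < v" "v < a + \<eta>" using vj by simp_all
    have "x' \<le> q2"
    proof (rule ccontr)
      assume "\<not> x' \<le> q2"
      then have "q2 \<le> v" using vb(4) by simp
      then show False using va eta basics by linarith
    qed
    then have "x' \<le> v" using vb(3) by simp
    moreover have "x' < H w + \<eta>" "H w - \<eta> < x'" using x unfolding w_def abs_less_iff by linarith+
    ultimately have "H w < a + 2*\<eta>" using va basics by linarith
    moreover have "a - \<eta> < w" using cL w basics by linarith
    ultimately have "w - a < \<rho>" "- \<rho> < w - a" using Hw eta basics by linarith+
    then have wa: "\<bar>w - a\<bar> < \<rho>" by (simp add: abs_less_iff)
    have small: "H w - w < 3*\<eta>" using \<open>H w < a + 2*\<eta>\<close> \<open>a - \<eta> < w\<close> by linarith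
    from wa have "H w - w > \<mu>/2" by (rule near)
    then have "\<mu> < 2 * (H w - w)" by (simp add: divide_less_eq)
    moreover have "2 * (H w - w) < 6 * \<eta>" using small by simp
    ultimately show False using eta(6) by simp
  qed
qed




lemma neg_pow: "((\<lambda>t::real. - (H::real\<Rightarrow>real) (- t)) ^^ m) t = - (H ^^ m) (- t)"
  by (induction m arbitrary: t) auto

lemma AL:
  assumes D: "deg1 H" and t0: "H t0 = t0" and t1: "H t1 = t1"
    and dst: "\<forall>k::int. t1 \<noteq> t0 + 2*pi * of_int k" and Ha: "H a \<noteq> a"
  shows "\<exists>\<eta>>0. \<forall>c m1 x' m2 (j::int). \<bar>c - a\<bar> < \<eta> \<longrightarrow> \<bar>x' - H ((H ^^ m1) c)\<bar> < \<eta> \<longrightarrow>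
            \<bar>(H ^^ m2) x' - (a + 2*pi * of_int j)\<bar> < \<eta> \<longrightarrow> False"
proof (cases "H a > a")
  case True
  then show ?thesis using AL_pos[OF D t0 t1 dst] by blast
next
  case False
  then have Ha': "H a < a" using Ha by simp
  define H' where "H' t = - H (- t)" for t
  have cont: "continuous_on UNIV H" and mono: "strict_mono H" using D by (auto simp: deg1_def)
  have D': "deg1 H'"
    unfolding deg1_def
  proof (intro conjI allI)
    show "continuous_on UNIV H'" unfolding H'_def
      by (intro continuous_intros continuous_on_compose2[OF cont]) auto
    show "strict_mono H'" unfolding H'_def strict_mono_def using mono by (simp add: strict_mono_less)
    fix t show "H' (t + 2*pi) = H' t + 2*pi"
      unfolding H'_def using deg1_minus[OF D, of "- t"] by simp
  qed
  have powH': "(H' ^^ m) t = - (H ^^ m) (- t)" for m t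
    unfolding H'_def[abs_def] by (rule neg_pow)
  have t0': "H' (- t0) = - t0" and t1': "H' (- t1) = - t1" unfolding H'_def using t0 t1 by simp_all
  have dst': "\<forall>k::int. - t1 \<noteq> - t0 + 2*pi * of_int k"
  proof
    fix k :: int
    show "- t1 \<noteq> - t0 + 2*pi * of_int k"
    proof
      assume "- t1 = - t0 + 2*pi * of_int k"
      then have "t1 = t0 + 2*pi * of_int (- k)" by simp
      then show False using dst by blast
    qed
  qed
  have Ha'': "H' (- a) > - a" unfolding H'_def using Ha' by simp
  obtain \<eta> where eta: "\<eta> > 0" and P: "\<forall>c m1 x' m2 (j::int). \<bar>c - (- a)\<bar> < \<eta> \<longrightarrow> \<bar>x' - H' ((H' ^^ m1) c)\<bar> < \<eta> \<longrightarrow>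
            \<bar>(H' ^^ m2) x' - (- a + 2*pi * of_int j)\<bar> < \<eta> \<longrightarrow> False"
    using AL_pos[OF D' t0' t1' dst' Ha''] by blast
  show ?thesis
  proof (intro exI[of _ \<eta>] conjI allI impI)
    show "\<eta> > 0" by (rule eta)
    fix c m1 x' m2 and j :: int
    assume c: "\<bar>c - a\<bar> < \<eta>" and x: "\<bar>x' - H ((H ^^ m1) c)\<bar> < \<eta>"
      and v: "\<bar>(H ^^ m2) x' - (a + 2*pi * of_int j)\<bar> < \<eta>"
    have c': "\<bar>- c - (- a)\<bar> < \<eta>" using c by (simp add: abs_minus_commute)
    have "H' ((H' ^^ m1) (- c)) = - H ((H ^^ m1) c)" unfolding powH' H'_def by simp
    then have x'': "\<bar>- x' - H' ((H' ^^ m1) (- c))\<bar> < \<eta>" using x by (simp add: abs_minus_commute)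
    have "(H' ^^ m2) (- x') - (- a + 2*pi * of_int (- j)) = - ((H ^^ m2) x' - (a + 2*pi * of_int j))"
      unfolding powH' by simp
    then have v'': "\<bar>(H' ^^ m2) (- x') - (- a + 2*pi * of_int (- j))\<bar> < \<eta>" using v by simp
    show False using P c' x'' v'' by blast
  qed
qed

lemma degm1_solve: assumes D: "degm1 F" shows "\<exists>t. F t - t = y"
proof -
  have cont: "continuous_on UNIV F" using D by (simp add: degm1_def)
  obtain N :: nat where N: "\<bar>F 0 - y\<bar> < real N * (4*pi)" using reals_Archimedean3[of "4*pi"] by auto
  have e1: "F (0 + 2*pi * real N) = F 0 - 2*pi * real N" by (rule degm1_shift_nat[OF D])
  have e2: "F (- 2*pi * real N + 2*pi * of_int (int N)) = F (- 2*pi * real N) - 2*pi * of_int (int N)"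
    by (rule degm1_shift[OF D])
  then have e2': "F (- 2*pi * real N) = F 0 + 2*pi * real N" by simp
  define \<phi> where "\<phi> t = F t - t" for t
  have phic: "continuous_on UNIV \<phi>" unfolding \<phi>_def using cont by (intro continuous_intros) auto
  have a1: "\<phi> (2*pi * real N) \<le> y" unfolding \<phi>_def using e1 N by (simp add: abs_less_iff algebra_simps)
  have a2: "y \<le> \<phi> (- 2*pi * real N)" unfolding \<phi>_def using e2' N by (simp add: abs_less_iff algebra_simps)
  have a3: "- 2*pi * real N \<le> 2*pi * real N" by simp
  obtain t where "\<phi> t = y"
    using IVT2'[of \<phi> "2*pi * real N" y "- 2*pi * real N", OF a1 a2 a3 continuous_on_subset[OF phic]] by auto
  then show ?thesis unfolding \<phi>_def by blast
qed

lemma funpow_odd: "F ^^ (2*m+1) = F \<circ> ((F \<circ> F) ^^ m)" "F ^^ (2*m+1) = ((F \<circ> F) ^^ m) \<circ> F"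
proof -
  have e: "F ^^ (2*m) = (F \<circ> F) ^^ m"
  proof -
    have "(F ^^ 2) ^^ m = F ^^ (2*m)" by (simp add: funpow_mult)
    moreover have "F ^^ 2 = F \<circ> F" by (simp add: numeral_2_eq_2)
    ultimately show ?thesis by simp
  qed
  show "F ^^ (2*m+1) = F \<circ> ((F \<circ> F) ^^ m)" using e by simp
  show "F ^^ (2*m+1) = ((F \<circ> F) ^^ m) \<circ> F" using e funpow_Suc_right[of "2*m" F] by simp
qed

lemma funpow_even: "F ^^ (2*m) = (F \<circ> F) ^^ m"
proof -
  have "(F ^^ 2) ^^ m = F ^^ (2*m)" by (simp add: funpow_mult)
  moreover have "F ^^ 2 = F \<circ> F" by (simp add: numeral_2_eq_2)
  ultimately show ?thesis by simp
qed

lemma odd_block: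
  assumes DF: "degm1 F" and Ha: "F (F a) \<noteq> a"
  shows "\<exists>\<eta>>0. \<forall>c d c' d' n (k::int) (k'::int). odd n \<longrightarrow> \<bar>c - a\<bar> < \<eta> \<longrightarrow> \<bar>d - b\<bar> < \<eta> \<longrightarrow>
     \<bar>c' - a\<bar> < \<eta> \<longrightarrow> \<bar>d' - b\<bar> < \<eta> \<longrightarrow> (F ^^ n) c = d' + 2*pi * of_int k \<longrightarrow>
     (F ^^ n) d = c' + 2*pi * of_int k' \<longrightarrow> False"
proof -
  define H where "H = F \<circ> F"
  have DH: "deg1 H" unfolding H_def using degm1_comp2[OF DF DF] .
  obtain t0 where t0: "F t0 - t0 = 0" using degm1_solve[OF DF] by blast
  obtain t1 where t1: "F t1 - t1 = 2*pi" using degm1_solve[OF DF] by blast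
  have Ht0: "H t0 = t0" unfolding H_def using t0 by simp
  have Ft1: "F t1 = t1 + 2*pi" using t1 by simp
  have Ht1: "H t1 = t1" unfolding H_def using Ft1 DF by (simp add: degm1_def)
  have dst: "\<forall>k::int. t1 \<noteq> t0 + 2*pi * of_int k"
  proof
    fix k :: int
    show "t1 \<noteq> t0 + 2*pi * of_int k"
    proof
      assume tk: "t1 = t0 + 2*pi * of_int k"
      have "F t1 = F t0 - 2*pi * of_int k" unfolding tk by (rule degm1_shift[OF DF])
      then have "t0 + 2*pi * of_int k + 2*pi = t0 - 2*pi * of_int k" using Ft1 t0 tk by simp
      then have "2*pi * (2 * of_int k + 1) = 0" by (simp add: algebra_simps)
      then have "(of_int (2*k+1) :: real) = 0" by simp
      then have "2*k + 1 = 0" by linarith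
      then show False by presburger
    qed
  qed
  have HaH: "H a \<noteq> a" unfolding H_def using Ha by simp
  obtain \<eta>1 where eta1: "\<eta>1 > 0" and P: "\<forall>c m1 x' m2 (j::int). \<bar>c - a\<bar> < \<eta>1 \<longrightarrow> \<bar>x' - H ((H ^^ m1) c)\<bar> < \<eta>1 \<longrightarrow>
            \<bar>(H ^^ m2) x' - (a + 2*pi * of_int j)\<bar> < \<eta>1 \<longrightarrow> False"
    using AL[OF DH Ht0 Ht1 dst HaH] by blast
  have contF: "continuous_on UNIV F" using DF by (simp add: degm1_def)
  obtain \<rho> where rho: "\<rho> > 0" "\<And>x. dist x b < \<rho> \<Longrightarrow> dist (F x) (F b) < \<eta>1/2"
    using contF eta1 unfolding continuous_on_iff by (metis UNIV_I half_gt_zero)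
  define \<eta> where "\<eta> = min \<eta>1 \<rho>"
  have eta: "\<eta> > 0" "\<eta> \<le> \<eta>1" "\<eta> \<le> \<rho>" unfolding \<eta>_def using eta1 rho by auto
  show ?thesis
  proof (intro exI[of _ \<eta>] conjI allI impI)
    show "\<eta> > 0" by (rule eta(1))
    fix c d c' d' n and k k' :: int
    assume n: "odd n" and c: "\<bar>c - a\<bar> < \<eta>" and d: "\<bar>d - b\<bar> < \<eta>" and c': "\<bar>c' - a\<bar> < \<eta>" and d': "\<bar>d' - b\<bar> < \<eta>"
      and Fc: "(F ^^ n) c = d' + 2*pi * of_int k" and Fd: "(F ^^ n) d = c' + 2*pi * of_int k'"
    obtain m where m: "n = 2*m+1" using n oddE by blast
    have o1: "(F ^^ n) x = F ((H ^^ m) x)" for x unfolding m H_def funpow_odd(1) by simp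
    have o2: "(F ^^ n) x = (H ^^ m) (F x)" for x unfolding m H_def funpow_odd(2) by simp
    define w where "w = (H ^^ m) c"
    have Fw: "F w = d' + 2*pi * of_int k" using Fc o1 unfolding w_def by simp
    have Hw: "H w = F d' - 2*pi * of_int k" unfolding H_def using Fw degm1_shift[OF DF, of d' k] by simp
    define x' where "x' = F d - 2*pi * of_int k"
    have db: "dist (F d) (F b) < \<eta>1/2" using rho(2)[of d] d eta by (simp add: dist_real_def)
    have d'b: "dist (F d') (F b) < \<eta>1/2" using rho(2)[of d'] d' eta by (simp add: dist_real_def)
    have xH: "\<bar>x' - H ((H ^^ m) c)\<bar> < \<eta>1"
    proof -
      have "x' - H ((H ^^ m) c) = F d - F d'" unfolding x'_def w_def[symmetric] Hw by simp
      moreover have "\<bar>F d - F d'\<bar> < \<eta>1" using db d'b unfolding dist_real_def by linarith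
      ultimately show ?thesis by simp
    qed
    have DHm: "deg1 (H ^^ m)" using DH by (rule deg1_pow)
    have "(H ^^ m) x' = (H ^^ m) (F d + 2*pi * of_int (- k))" unfolding x'_def by simp
    also have "\<dots> = (H ^^ m) (F d) + 2*pi * of_int (- k)" by (rule deg1_shift[OF DHm])
    also have "\<dots> = c' + 2*pi * of_int k' - 2*pi * of_int k" using Fd o2 by simp
    finally have "(H ^^ m) x' - (a + 2*pi * of_int (k' - k)) = c' - a" by (simp add: algebra_simps)
    then have vH: "\<bar>(H ^^ m) x' - (a + 2*pi * of_int (k' - k))\<bar> < \<eta>1" using c' eta by simp
    have cH: "\<bar>c - a\<bar> < \<eta>1" using c eta by simp
    show False using P cH xH vH by blast
  qed
qed




lemma rev_even_data:
  assumes L: "circle_lift f F" and DF: "degm1 F"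
    and Aeq: "A = cis ` {a..b}" and ab: "a \<le> b" "b < a + 2*pi"
    and NW: "A \<in> nonwandering_set hausdorff_dist hyperspace_C (induced_map f)"
    and bad: "F (F a) \<noteq> a \<or> F (F b) \<noteq> b"
    and eps: "\<epsilon> > 0"
  shows "\<exists>n c d c' d'. n \<ge> 1 \<and> \<bar>c - a\<bar> < \<epsilon> \<and> \<bar>d - b\<bar> < \<epsilon> \<and> \<bar>c' - a\<bar> < \<epsilon> \<and> \<bar>d' - b\<bar> < \<epsilon>
     \<and> (f ^^ n) (cis c) = cis c' \<and> (f ^^ n) (cis d) = cis d'"
proof -
  have C: "continuous_on UNIV F" using DF by (simp add: degm1_def)
  obtain \<eta> where eta: "\<eta> > 0" and P: "\<And>c d c' d' n (k::int) (k'::int). odd n \<Longrightarrow> \<bar>c - a\<bar> < \<eta> \<Longrightarrow> \<bar>d - b\<bar> < \<eta> \<Longrightarrow>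
     \<bar>c' - a\<bar> < \<eta> \<Longrightarrow> \<bar>d' - b\<bar> < \<eta> \<Longrightarrow> (F ^^ n) c = d' + 2*pi * of_int k \<Longrightarrow>
     (F ^^ n) d = c' + 2*pi * of_int k' \<Longrightarrow> False"
  proof (cases "F (F a) \<noteq> a")
    case True
    from odd_block[OF DF True, of b] obtain \<eta> where "\<eta> > 0" and
      Q: "\<forall>c d c' d' n (k::int) (k'::int). odd n \<longrightarrow> \<bar>c - a\<bar> < \<eta> \<longrightarrow> \<bar>d - b\<bar> < \<eta> \<longrightarrow>
     \<bar>c' - a\<bar> < \<eta> \<longrightarrow> \<bar>d' - b\<bar> < \<eta> \<longrightarrow> (F ^^ n) c = d' + 2*pi * of_int k \<longrightarrow>
     (F ^^ n) d = c' + 2*pi * of_int k' \<longrightarrow> False" by blast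
    show ?thesis by (rule that[OF \<open>\<eta> > 0\<close>]) (use Q in blast)
  next
    case False
    then have Fb: "F (F b) \<noteq> b" using bad by blast
    from odd_block[OF DF Fb, of a] obtain \<eta> where "\<eta> > 0" and
      Q: "\<forall>c d c' d' n (k::int) (k'::int). odd n \<longrightarrow> \<bar>c - b\<bar> < \<eta> \<longrightarrow> \<bar>d - a\<bar> < \<eta> \<longrightarrow>
     \<bar>c' - b\<bar> < \<eta> \<longrightarrow> \<bar>d' - a\<bar> < \<eta> \<longrightarrow> (F ^^ n) c = d' + 2*pi * of_int k \<longrightarrow>
     (F ^^ n) d = c' + 2*pi * of_int k' \<longrightarrow> False" by blast
    show ?thesis
    proof (rule that[OF \<open>\<eta> > 0\<close>])
      fix c d c' d' n and k k' :: int
      assume "odd n" "\<bar>c - a\<bar> < \<eta>" "\<bar>d - b\<bar> < \<eta>" "\<bar>c' - a\<bar> < \<eta>" "\<bar>d' - b\<bar> < \<eta>"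
        "(F ^^ n) c = d' + 2*pi * of_int k" "(F ^^ n) d = c' + 2*pi * of_int k'"
      then show False using Q[rule_format, of n d c d' c' k' k] by blast
    qed
  qed
  define \<delta> where "\<delta> = min \<epsilon> \<eta>"
  have dl: "\<delta> > 0" "\<delta> \<le> \<epsilon>" "\<delta> \<le> \<eta>" unfolding \<delta>_def using eps eta by auto
  obtain n c d c' d' where nd: "n \<ge> 1" "\<bar>c - a\<bar> < \<delta>" "\<bar>d - b\<bar> < \<delta>" "\<bar>c' - a\<bar> < \<delta>" "\<bar>d' - b\<bar> < \<delta>"
      "c \<le> d" "d - c < 2*pi" "c' \<le> d'" "d' - c' < 2*pi" "cis ` ((F ^^ n) ` {c..d}) = cis ` {c'..d'}"
    using endpoint_data[OF L C Aeq ab NW dl(1)] by blast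
  have nde: "\<bar>c - a\<bar> < \<eta>" "\<bar>d - b\<bar> < \<eta>" "\<bar>c' - a\<bar> < \<eta>" "\<bar>d' - b\<bar> < \<eta>"
    "\<bar>c - a\<bar> < \<epsilon>" "\<bar>d - b\<bar> < \<epsilon>" "\<bar>c' - a\<bar> < \<epsilon>" "\<bar>d' - b\<bar> < \<epsilon>"
    using nd(2-5) dl by linarith+
  have "even n"
  proof (rule ccontr)
    assume "\<not> even n"
    then have on: "odd n" by simp
    then have Dn: "degm1 (F ^^ n)" using degm1_pow[OF DF] by blast
    note im = degm1_image[OF Dn nd(6,7)]
    have "cis ((F ^^ n) d) = cis c' \<and> cis ((F ^^ n) c) = cis d'"
      using nd(10) im nd(8,9) by (intro arc_unique_cis) auto
    then obtain k k' :: int where "(F ^^ n) c = d' + 2*pi * of_int k" "(F ^^ n) d = c' + 2*pi * of_int k'"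
      using cis_eq_iff_int by meson
    then show False using P[OF on nde(1-4)] by blast
  qed
  then have Dn: "deg1 (F ^^ n)" using degm1_pow[OF DF] by blast
  note im = deg1_image[OF Dn nd(6,7)]
  have "cis ((F ^^ n) c) = cis c' \<and> cis ((F ^^ n) d) = cis d'"
    using nd(10) im nd(8,9) by (intro arc_unique_cis) auto
  then show ?thesis using nd(1) nde(5-8) lift_pow[OF L] by metis
qed

lemma periodic_H:
  assumes D: "deg1 H" and t0: "H t0 = t0" and p: "p > 0" and Hp: "(H ^^ p) t = t + 2*pi * of_int k"
  shows "H t = t"
proof -
  have Dp: "deg1 (H ^^ p)" using D by (rule deg1_pow)
  have monop: "strict_mono (H ^^ p)" using Dp by (simp add: deg1_def)
  define i where "i = \<lfloor>(t - t0) / (2*pi)\<rfloor>"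
  have "of_int i \<le> (t - t0) / (2*pi)" "(t - t0) / (2*pi) < of_int i + 1" unfolding i_def by simp_all
  then have ia: "2*pi * of_int i \<le> t - t0" "t - t0 < 2*pi * of_int i + 2*pi" using pi_gt_zero by (simp_all add: field_simps)
  define s where "s = t0 + 2*pi * of_int i"
  have fs: "(H ^^ p) s = s" unfolding s_def using deg1_shift[OF Dp, of t0 i] deg1_pow_fix[of H t0 p, OF t0] by simp
  have fs2: "(H ^^ p) (s + 2*pi) = s + 2*pi" using fs Dp by (simp add: deg1_def)
  have st: "s \<le> t" "t < s + 2*pi" using ia unfolding s_def by linarith+
  have "s \<le> (H ^^ p) t" using monop st(1) fs by (metis strict_mono_less_eq)
  moreover have "(H ^^ p) t < s + 2*pi" using monop st(2) fs2 by (metis strict_mono_less)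
  ultimately have "2*pi * of_int k < 2*pi" "- (2*pi) < 2*pi * of_int k" using Hp st by linarith+
  then have "\<bar>2*pi * of_int k\<bar> < 2*pi" by (simp add: abs_less_iff)
  then have "k = 0" by (rule int_small_zero)
  then have Hpt: "(H ^^ p) t = t" using Hp by simp
  have mono: "strict_mono H" using D by (simp add: deg1_def)
  show ?thesis
  proof (rule ccontr)
    assume ne: "H t \<noteq> t"
    then consider "H t > t" | "H t < t" by linarith
    then show False
    proof cases
      case 1
      have "(H ^^ Suc m) t > t" for m
      proof (induction m)
        case 0 then show ?case using 1 by simp
      next
        case (Suc m)
        have "H ((H ^^ Suc m) t) > H t" using Suc mono by (simp add: strict_mono_less)
        then show ?case using 1 by simp
      qed
      from this[of "p - 1"] show False using p Hpt by simp
    next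
      case 2
      have "(H ^^ Suc m) t < t" for m
      proof (induction m)
        case 0 then show ?case using 2 by simp
      next
        case (Suc m)
        have "H ((H ^^ Suc m) t) < H t" using Suc mono by (simp add: strict_mono_less)
        then show ?case using 2 by simp
      qed
      from this[of "p - 1"] show False using p Hpt by simp
    qed
  qed
qed

lemma rev_periodic_fix:
  assumes L: "circle_lift f F" and DF: "degm1 F" and P: "cis t \<in> periodic_points S1 f"
  shows "F (F t) = t"
proof -
  obtain p where p: "p > 0" "(f ^^ p) (cis t) = cis t" using P by (auto simp: periodic_points_def)
  have "(f ^^ (p*2)) (cis t) = cis t"
  proof -
    have "(f ^^ (p*2)) (cis t) = ((f ^^ p) ^^ 2) (cis t)" by (simp add: funpow_mult)
    also have "\<dots> = cis t" using p by (simp add: numeral_2_eq_2)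
    finally show ?thesis .
  qed
  then have "cis ((F ^^ (2*p)) t) = cis t" using lift_pow[OF L] by (metis mult.commute)
  then have "cis (((F \<circ> F) ^^ p) t) = cis t" by (simp add: funpow_even)
  then obtain k :: int where k: "((F \<circ> F) ^^ p) t = t + 2*pi * of_int k" using cis_eq_iff_int by blast
  obtain t0 where t0: "F t0 - t0 = 0" using degm1_solve[OF DF] by blast
  have "(F \<circ> F) t0 = t0" using t0 by simp
  from periodic_H[OF degm1_comp2[OF DF DF] this p(1) k] show ?thesis by simp
qed

lemma part_ii:
  assumes MS: "morse_smale f" and OR: "orientation_reversing f"
  shows "nonwandering_set hausdorff_dist hyperspace_C (induced_map f) =
           per_points hyperspace_C (induced_map f) 2 \<union> fixed_points hyperspace_C (induced_map f)"
proof -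
  obtain F where F: "continuous_on UNIV F" "circle_lift f F" "\<forall>s t. s < t \<longrightarrow> F t < F s"
    using OR unfolding orientation_reversing_def by blast
  have diffeo: "f ` S1 = S1" "inj_on f S1" using MS by (auto simp: morse_smale_def circle_C1_diffeo_def)
  have DF: "degm1 F" using reversing_degm1[OF F(2,1,3) diffeo(2)] .
  have NWf: "nonwandering_set dist S1 f \<subseteq> periodic_points S1 f" using MS by (simp add: morse_smale_def)
  have S1fix: "induced_map f S1 = S1" using diffeo(1) by (simp add: induced_map_def)
  show ?thesis
  proof
    show "nonwandering_set hausdorff_dist hyperspace_C (induced_map f) \<subseteq> per_points hyperspace_C (induced_map f) 2 \<union> fixed_points hyperspace_C (induced_map f)"
    proof
      fix A assume NW: "A \<in> nonwandering_set hausdorff_dist hyperspace_C (induced_map f)"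
      have AC: "A \<in> hyperspace_C" using NW by (simp add: nonwandering_set_def)
      show "A \<in> per_points hyperspace_C (induced_map f) 2 \<union> fixed_points hyperspace_C (induced_map f)"
      proof (cases "A = S1")
        case True then show ?thesis using S1fix S1_in_C by (simp add: fixed_points_def)
      next
        case False
        obtain a b where ab: "a \<le> b" "b < a + 2*pi" "A = cis ` {a..b}" using arc_classify[OF AC False] by blast
        have per2: "cis a \<in> periodic_points S1 f \<and> cis b \<in> periodic_points S1 f"
        proof (rule ccontr)
          assume nper: "\<not> (cis a \<in> periodic_points S1 f \<and> cis b \<in> periodic_points S1 f)"
          have perF: "cis t \<in> periodic_points S1 f" if "F (F t) = t" for t
          proof -
            have "(f ^^ 2) (cis t) = cis ((F ^^ 2) t)" by (rule lift_pow[OF F(2)])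
            also have "\<dots> = cis t" using that by (simp add: numeral_2_eq_2)
            finally show ?thesis unfolding periodic_points_def by (intro CollectI conjI exI[of _ 2]) auto
          qed
          have bad: "F (F a) \<noteq> a \<or> F (F b) \<noteq> b" using nper perF by blast
          have "cis a \<in> nonwandering_set dist S1 f"
          proof (rule nw_of_returns)
            fix \<epsilon> :: real assume "\<epsilon> > 0"
            from rev_even_data[OF F(2) DF ab(3) ab(1,2) NW bad this]
            show "\<exists>n s s'. n \<ge> 1 \<and> \<bar>s - a\<bar> < \<epsilon> \<and> \<bar>s' - a\<bar> < \<epsilon> \<and> (f ^^ n) (cis s) = cis s'" by blast
          qed
          moreover have "cis b \<in> nonwandering_set dist S1 f"
          proof (rule nw_of_returns)
            fix \<epsilon> :: real assume "\<epsilon> > 0"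
            from rev_even_data[OF F(2) DF ab(3) ab(1,2) NW bad this]
            show "\<exists>n s s'. n \<ge> 1 \<and> \<bar>s - b\<bar> < \<epsilon> \<and> \<bar>s' - b\<bar> < \<epsilon> \<and> (f ^^ n) (cis s) = cis s'" by blast
          qed
          ultimately show False using nper NWf by blast
        qed
        have fa: "F (F a) = a" and fb: "F (F b) = b" using per2 rev_periodic_fix[OF F(2) DF] by blast+
        have D2: "deg1 (F ^^ 2)" using degm1_pow[OF DF, of 2] by simp
        have "cis ((F ^^ 2) a) = cis a" "cis ((F ^^ 2) b) = cis b" using fa fb by (simp_all add: numeral_2_eq_2)
        then have "cis ` ((F ^^ 2) ` {a..b}) = cis ` {a..b}" using deg1_fix_arc[OF D2 ab(1,2)] by blast
        then have fix2: "(induced_map f ^^ 2) A = A" unfolding ab(3) pow_arc_image[OF F(2)] .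
        show ?thesis
        proof (cases "induced_map f A = A")
          case True then show ?thesis using AC by (simp add: fixed_points_def)
        next
          case False
          have "\<forall>j. 0 < j \<and> j < 2 \<longrightarrow> (induced_map f ^^ j) A \<noteq> A"
          proof (intro allI impI)
            fix j :: nat assume "0 < j \<and> j < 2"
            then have "j = 1" by simp
            then show "(induced_map f ^^ j) A \<noteq> A" using False by simp
          qed
          then have "A \<in> per_points hyperspace_C (induced_map f) 2"
            unfolding per_points_def using AC fix2 by simp
          then show ?thesis by blast
        qed
      qed
    qed
  next
    show "per_points hyperspace_C (induced_map f) 2 \<union> fixed_points hyperspace_C (induced_map f) \<subseteq> nonwandering_set hausdorff_dist hyperspace_C (induced_map f)"
    proof
      fix A assume "A \<in> per_points hyperspace_C (induced_map f) 2 \<union> fixed_points hyperspace_C (induced_map f)"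
      then consider "A \<in> per_points hyperspace_C (induced_map f) 2" | "A \<in> fixed_points hyperspace_C (induced_map f)" by blast
      then show "A \<in> nonwandering_set hausdorff_dist hyperspace_C (induced_map f)"
      proof cases
        case 1
        then have AC: "A \<in> hyperspace_C" and P2: "(induced_map f ^^ 2) A = A" by (auto simp: per_points_def)
        have H: "hausdorff_dist A A = 0" using AC by (intro hd_self) (auto simp: hyperspace_C_def)
        show ?thesis by (rule periodic_nonwandering[of A hyperspace_C 2 "induced_map f" hausdorff_dist, OF AC _ P2 H]) simp
      next
        case 2
        then have AC: "A \<in> hyperspace_C" and P1: "induced_map f A = A" by (auto simp: fixed_points_def)
        have P: "(induced_map f ^^ 1) A = A" using P1 by simp
        have H: "hausdorff_dist A A = 0" using AC by (intro hd_self) (auto simp: hyperspace_C_def)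
        show ?thesis by (rule periodic_nonwandering[of A hyperspace_C 1 "induced_map f" hausdorff_dist, OF AC _ P H]) simp
      qed
    qed
  qed
qed

theorem lemma3p2:
  fixes f :: "complex \<Rightarrow> complex"
  assumes "morse_smale f"
  shows "(\<forall>N. orientation_preserving f \<and>
              (\<forall>p \<in> periodic_points S1 f. p \<in> per_points S1 f N) \<longrightarrow>
            nonwandering_set hausdorff_dist hyperspace_C (induced_map f) =
              per_points hyperspace_C (induced_map f) N \<union> {S1})
       \<and> (orientation_reversing f \<longrightarrow>
            nonwandering_set hausdorff_dist hyperspace_C (induced_map f) =
              per_points hyperspace_C (induced_map f) 2 \<union> fixed_points hyperspace_C (induced_map f))"
  using part_i[OF assms] part_ii[OF assms] by blast



end
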